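(* Let $\alpha\in(0,1)$, $\tau\in(0,1]$, $\lambda\in[0,\tau)$, $0\le W_0\le\alpha$, and $\{\gamma_j\}_{j\ge0}$ nonnegative, nonincreasing with $\sum_j\gamma_j=1$. Run the ADDIS$^*$ algorithm (defined in the context) on $p$-values $P_1,P_2,\dots$. Then for every $t$, $\alpha_t$ is a monotonic function of the past, $\tau>\lambda\ge\alpha_t$, and $\widehat{\mathrm{FDP}}_{\mathrm{ADDIS}}(t)\le\alpha$ (with $\lambda_j\equiv\lambda$, $\tau_j\equiv\tau$). Consequently, if the null $p$-values are conditionally uniformly conservative then $\mathrm{mFDR}(t)\le\alpha$ for all $t$, and if moreover the null $p$-values are independent of each other and of the non-nulls then $\mathrm{FDR}(t)\le\alpha$ for all $t$.
   Context: Setting: $p$-values $P_1,P_2,\dots$ for hypotheses $H_1,H_2,\dots$, $\mathcal H_0$ the set of true null indices; with $\lambda_j\equiv\lambda,\tau_j\equiv\tau$, indicators $S_j=\mathbf 1\{P_j\le\tau\}$, $C_j=\mathbf 1\{P_j\le\lambda\}$, $R_j=\mathbf 1\{P_j\le\alpha_j\}$, $R(t)=\{j\le t:R_j=1\}$, $\mathcal F^t=\sigma(R_{1:t},C_{1:t},S_{1:t})$. ADDIS$^*$ algorithm: at time $t$ reject $H_t$ iff $P_t\le\alpha_t$, where $\alpha_t=\min\{\lambda,\hat\alpha_t\}$ and $$\hat\alpha_t=(\tau-\lambda)\Big(W_0\gamma_{S^t-C_{0+}}+(\alpha-W_0)\gamma_{S^t-\kappa_1^*-C_{1+}}+\alpha\sum_{j\ge2}\gamma_{S^t-\kappa_j^*-C_{j+}}\Big),$$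 with $S^t=\sum_{i<t}\mathbf 1\{P_i\le\tau\}$; for $j\ge1$, $\kappa_j=\min\{i\in[t-1]:\sum_{k\le i}\mathbf 1\{P_k\le\alpha_k\}\ge j\}$ (the time of the $j$-th rejection), and $\kappa_0=0$; $\kappa_j^*=\sum_{i\le\kappa_j}\mathbf 1\{P_i\le\tau\}$; $C_{j+}=\sum_{i=\kappa_j+1}^{t-1}\mathbf 1\{P_i\le\lambda\}$; terms involving $\kappa_j$ for $j$ larger than the number of rejections before time $t$ are omitted (set to zero). Null $p$-values are conditionally uniformly conservative if for every $t\in\mathcal H_0$ and all $x,\tau'\in(0,1)$, $\Pr(P_t/\tau'\le x\mid P_t\le\tau',\mathcal F^{t-1})\le x$. $\widehat{\mathrm{FDP}}_{\mathrm{ADDIS}}(t)=\big(\sum_{j\le t}\alpha_j\frac{\mathbf 1\{\lambda_j<P_j\le\tau_j\}}{\tau_j-\lambda_j}\big)/(|R(t)|\vee1)$; $\mathrm{FDR}(t)=\mathbb E[|\mathcal H_0\cap R(t)|/(|R(t)|\vee1)]$, $\mathrm{mFDR}(t)=\mathbb E[|\mathcal H_0\cap R(t)|]/\mathbb E[|R(t)|\vee1]$. A function of $(R_{1:t-1},C_{1:t-1},S_{1:t-1})$ is a monotonic function of the past if it is coordinatewise nondecreasing in each $R_i$ and $C_i$ and coordinatewise nonincreasing in each $S_i$. *)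

theory Defs
  imports "HOL-Probability.Probability"
begin

text \<open>Parameters: a = alpha (target level), ta = tau, la = lambda, W0, g = gamma sequence.
  Time indices start at 1; index 0 of a p-value sequence is never used.\<close>

text \<open>The un-truncated ADDIS* level hat-alpha_t as a function of the past indicators
  R_i, C_i, S_i for 1 <= i < t.  cntS k = number of i with k < i < t and S_i
  (so cntS 0 = S^t and cntS kappa_j = S^t - kappa_j^*), cntC k = C_{j+}.
  ks is the increasing list of rejection times kappa_1 < kappa_2 < ... before t
  (ks ! 0 = kappa_1 carries weight a - W0, later ones weight a).\<close>
definition addis_hat ::
  "real \<Rightarrow> real \<Rightarrow> real \<Rightarrow> real \<Rightarrow> (nat \<Rightarrow> real) \<Rightarrow> nat \<Rightarrow>
   (nat \<Rightarrow> bool) \<Rightarrow> (nat \<Rightarrow> bool) \<Rightarrow> (nat \<Rightarrow> bool) \<Rightarrow> real" where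
  "addis_hat a ta la W0 g t R C S =
    (let cntS = (\<lambda>k. card {i. k < i \<and> i < t \<and> S i});
         cntC = (\<lambda>k. card {i. k < i \<and> i < t \<and> C i});
         ks = sorted_list_of_set {i. 1 \<le> i \<and> i < t \<and> R i}
     in (ta - la) * (W0 * g (cntS 0 - cntC 0)
          + (\<Sum>j < length ks. (if j = 0 then a - W0 else a) * g (cntS (ks ! j) - cntC (ks ! j)))))"

primrec addis_hist ::
  "real \<Rightarrow> real \<Rightarrow> real \<Rightarrow> real \<Rightarrow> (nat \<Rightarrow> real) \<Rightarrow> (nat \<Rightarrow> real) \<Rightarrow> nat \<Rightarrow> (nat \<Rightarrow> bool)" where
  "addis_hist a ta la W0 g P 0 = (\<lambda>_. False)"
| "addis_hist a ta la W0 g P (Suc t) =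
     (addis_hist a ta la W0 g P t)(Suc t :=
        P (Suc t) \<le> min la (addis_hat a ta la W0 g (Suc t) (addis_hist a ta la W0 g P t)
                                (\<lambda>i. P i \<le> la) (\<lambda>i. P i \<le> ta)))"

definition addis_alpha ::
  "real \<Rightarrow> real \<Rightarrow> real \<Rightarrow> real \<Rightarrow> (nat \<Rightarrow> real) \<Rightarrow> (nat \<Rightarrow> real) \<Rightarrow> nat \<Rightarrow> real" where
  "addis_alpha a ta la W0 g P t =
     min la (addis_hat a ta la W0 g t (addis_hist a ta la W0 g P (t - 1))
               (\<lambda>i. P i \<le> la) (\<lambda>i. P i \<le> ta))"

definition addis_rej ::
  "real \<Rightarrow> real \<Rightarrow> real \<Rightarrow> real \<Rightarrow> (nat \<Rightarrow> real) \<Rightarrow> (nat \<Rightarrow> real) \<Rightarrow> nat \<Rightarrow> bool" where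
  "addis_rej a ta la W0 g P j = (P j \<le> addis_alpha a ta la W0 g P j)"

definition addis_Rset ::
  "real \<Rightarrow> real \<Rightarrow> real \<Rightarrow> real \<Rightarrow> (nat \<Rightarrow> real) \<Rightarrow> (nat \<Rightarrow> real) \<Rightarrow> nat \<Rightarrow> nat set" where
  "addis_Rset a ta la W0 g P t = {j. 1 \<le> j \<and> j \<le> t \<and> addis_rej a ta la W0 g P j}"

definition addis_FDP_hat ::
  "real \<Rightarrow> real \<Rightarrow> real \<Rightarrow> real \<Rightarrow> (nat \<Rightarrow> real) \<Rightarrow> (nat \<Rightarrow> real) \<Rightarrow> nat \<Rightarrow> real" where
  "addis_FDP_hat a ta la W0 g P t =
     (\<Sum>j = 1..t. addis_alpha a ta la W0 g P j * (if la < P j \<and> P j \<le> ta then 1 else 0) / (ta - la))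
     / real (max (card (addis_Rset a ta la W0 g P t)) 1)"

definition monotone_past :: "nat \<Rightarrow> ((nat \<Rightarrow> bool) \<Rightarrow> (nat \<Rightarrow> bool) \<Rightarrow> (nat \<Rightarrow> bool) \<Rightarrow> real) \<Rightarrow> bool" where
  "monotone_past t f \<longleftrightarrow>
     (\<forall>R C S R' C' S'. (\<forall>i\<in>{1..<t}. R i = R' i \<and> C i = C' i \<and> S i = S' i)
          \<longrightarrow> f R C S = f R' C' S') \<and>
     (\<forall>R C S R' C' S'. (\<forall>i\<in>{1..<t}. (R i \<longrightarrow> R' i) \<and> (C i \<longrightarrow> C' i) \<and> (S' i \<longrightarrow> S i))
          \<longrightarrow> f R C S \<le> f R' C' S')"

definition addis_past_sets ::
  "'w measure \<Rightarrow> real \<Rightarrow> real \<Rightarrow> real \<Rightarrow> real \<Rightarrow> (nat \<Rightarrow> real) \<Rightarrow> (nat \<Rightarrow> 'w \<Rightarrow> real) \<Rightarrow> nat \<Rightarrow> 'w set set" where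
  "addis_past_sets M a ta la W0 g Pv t =
     sigma_sets (space M)
       (\<Union>i\<in>{1..<t}. {{\<omega> \<in> space M. addis_rej a ta la W0 g (\<lambda>j. Pv j \<omega>) i},
                      {\<omega> \<in> space M. Pv i \<omega> \<le> la},
                      {\<omega> \<in> space M. Pv i \<omega> \<le> ta}})"

text \<open>Null p-values are conditionally uniformly conservative:
  Pr(P_t/tau' <= x | P_t <= tau', F^{t-1}) <= x, expressed (as the definition of conditional
  probability given an event and a sigma-algebra) by: for every E in F^{t-1},
  Pr(P_t/tau' <= x, P_t <= tau', E) <= x * Pr(P_t <= tau', E).\<close>
definition cond_unif_conservative ::
  "'w measure \<Rightarrow> real \<Rightarrow> real \<Rightarrow> real \<Rightarrow> real \<Rightarrow> (nat \<Rightarrow> real) \<Rightarrow> (nat \<Rightarrow> 'w \<Rightarrow> real) \<Rightarrow> nat set \<Rightarrow> bool" where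
  "cond_unif_conservative M a ta la W0 g Pv H0 \<longleftrightarrow>
     (\<forall>t\<in>H0. \<forall>x\<in>{0<..<1}. \<forall>\<tau>'\<in>{0<..<1}. \<forall>E\<in>addis_past_sets M a ta la W0 g Pv t.
        measure M ({\<omega> \<in> space M. Pv t \<omega> / \<tau>' \<le> x \<and> Pv t \<omega> \<le> \<tau>'} \<inter> E)
          \<le> x * measure M ({\<omega> \<in> space M. Pv t \<omega> \<le> \<tau>'} \<inter> E))"

text \<open>The null p-values are mutually independent and independent of the (block of) non-null
  p-values: the sigma-algebras sigma(P_t), t in H0, and sigma(P_j : j >= 1, j not in H0)
  are mutually independent.\<close>
definition nulls_independent :: "'w measure \<Rightarrow> (nat \<Rightarrow> 'w \<Rightarrow> real) \<Rightarrow> nat set \<Rightarrow> bool" where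
  "nulls_independent M Pv H0 \<longleftrightarrow>
     prob_space.indep_sets M
       (\<lambda>k. case k of
              Some t \<Rightarrow> sets (vimage_algebra (space M) (Pv t) borel)
            | None \<Rightarrow> sigma_sets (space M)
                 (\<Union>j\<in>{j. 1 \<le> j \<and> j \<notin> H0}. sets (vimage_algebra (space M) (Pv j) borel)))
       (insert None (Some ` H0))"

end

theory Submission
  imports Defs
begin


locale ad =
  fixes a ta la W0 :: real and g :: "nat \<Rightarrow> real"
  assumes a_pos: "0 < a" and ta_pos: "0 < ta" and la_nn: "0 \<le> la" and la_ta: "la < ta"
    and W0_nn: "0 \<le> W0" and W0_a: "W0 \<le> a"
    and g_nn: "\<And>j. 0 \<le> g j" and g_noninc: "\<And>j. g (Suc j) \<le> g j" and g_sum: "g sums 1"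
begin

abbreviation "hat \<equiv> addis_hat a ta la W0 g"
abbreviation "hist \<equiv> addis_hist a ta la W0 g"
abbreviation "alph \<equiv> addis_alpha a ta la W0 g"
abbreviation "rej \<equiv> addis_rej a ta la W0 g"

lemma hat_local:
  assumes "\<forall>i\<in>{1..<t}. R i = R' i \<and> C i = C' i \<and> S i = S' i"
  shows "hat t R C S = hat t R' C' S'"
proof -
  have 1: "\<And>k. {i. k < i \<and> i < t \<and> S i} = {i. k < i \<and> i < t \<and> S' i}"
    using assms by (auto; metis atLeastLessThan_iff less_one not_less_eq not_less0 linorder_not_le)+
  have 2: "\<And>k. {i. k < i \<and> i < t \<and> C i} = {i. k < i \<and> i < t \<and> C' i}"
    using assms by (auto; metis atLeastLessThan_iff less_one not_less_eq not_less0 linorder_not_le)+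
  have 3: "{i. 1 \<le> i \<and> i < t \<and> R i} = {i. 1 \<le> i \<and> i < t \<and> R' i}"
    using assms by auto
  show ?thesis unfolding addis_hat_def Let_def 1 2 3 ..
qed

lemma hist_out: "s < i \<Longrightarrow> hist P s i = False"
  by (induction s) auto

lemma hist_0: "hist P s 0 = False"
  by (induction s) auto

lemma hist_stable: "i \<le> s \<Longrightarrow> hist P s i = hist P i i"
  by (induction s) (auto simp: le_Suc_eq)

lemma rej_hist: "1 \<le> i \<Longrightarrow> rej P i = hist P i i"
  by (cases i) (auto simp: addis_rej_def addis_alpha_def)

lemma hist_rej: "1 \<le> i \<Longrightarrow> i \<le> s \<Longrightarrow> hist P s i = rej P i"
  by (metis hist_stable rej_hist)

lemma alph_rej: "1 \<le> t \<Longrightarrow> alph P t = min la (hat t (rej P) (\<lambda>i. P i \<le> la) (\<lambda>i. P i \<le> ta))"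
  unfolding addis_alpha_def
  by (intro arg_cong2[where f=min] refl hat_local) (auto simp: hist_rej)


lemma sum_nth_distinct: "distinct xs \<Longrightarrow> (\<Sum>j<length xs. f (xs ! j)) = (\<Sum>k\<in>set xs. f k)"
proof -
  assume d: "distinct xs"
  have "(\<Sum>j<length xs. f (xs ! j)) = sum_list (map f xs)"
    by (simp add: sum_list_sum_nth atLeast0LessThan)
  also have "\<dots> = (\<Sum>k\<in>set xs. f k)" using d by (simp add: sum.distinct_set_conv_list)
  finally show ?thesis .
qed

lemma sorted_sum:
  fixes c b :: real
  assumes "finite X"
  shows "(\<Sum>j<length (sorted_list_of_set X). (if j = 0 then c else b) * f (sorted_list_of_set X ! j))
       = (\<Sum>k\<in>X. (if k = Min X then c else b) * f k)"
proof (cases "X = {}")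
  case True then show ?thesis by simp
next
  case False
  let ?ks = "sorted_list_of_set (X - {Min X})"
  have ks: "sorted_list_of_set X = Min X # ?ks" using sorted_list_of_set_nonempty[OF assms False] .
  have fin: "finite (X - {Min X})" using assms by auto
  have "(\<Sum>j<length (sorted_list_of_set X). (if j = 0 then c else b) * f (sorted_list_of_set X ! j))
      = c * f (Min X) + (\<Sum>j<length ?ks. b * f (?ks ! j))"
    unfolding ks by (simp add: sum.lessThan_Suc_shift del: sum.lessThan_Suc)
  also have "(\<Sum>j<length ?ks. b * f (?ks ! j)) = (\<Sum>k\<in>X - {Min X}. b * f k)"
    using sum_nth_distinct[of ?ks "\<lambda>k. b * f k"] fin by simp
  also have "c * f (Min X) + (\<Sum>k\<in>X - {Min X}. b * f k) = (\<Sum>k\<in>X. (if k = Min X then c else b) * f k)"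
  proof -
    have "Min X \<in> X" using assms False by simp
    then have "(\<Sum>k\<in>X. (if k = Min X then c else b) * f k) = c * f (Min X) + (\<Sum>k\<in>X - {Min X}. (if k = Min X then c else b) * f k)"
      using assms by (simp add: sum.remove)
    also have "(\<Sum>k\<in>X - {Min X}. (if k = Min X then c else b) * f k) = (\<Sum>k\<in>X - {Min X}. b * f k)"
      by (intro sum.cong) auto
    finally show ?thesis by simp
  qed
  finally show ?thesis .
qed

definition SW :: "real \<Rightarrow> nat set \<Rightarrow> (nat \<Rightarrow> real) \<Rightarrow> real" where
  "SW c X f = (\<Sum>k\<in>X. (if k = Min X then c else a) * f k)"

lemma SW_insert:
  assumes "finite X" "x \<notin> X" "0 \<le> c" "c \<le> a" "\<And>k. 0 \<le> f k"
  shows "SW c X f \<le> SW c (insert x X) f"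
proof (cases "X = {}")
  case True then show ?thesis using assms by (simp add: SW_def)
next
  case False
  have mX: "Min X \<in> X" using assms False by simp
  show ?thesis
  proof (cases "x < Min X")
    case True
    have m: "Min (insert x X) = x" using True assms \<open>X \<noteq> {}\<close> by (simp add: Min_insert)
    have "SW c (insert x X) f = c * f x + (\<Sum>k\<in>X. a * f k)"
      unfolding SW_def m using assms
      by (simp add: sum.insert) (intro sum.cong, auto)
    also have "(\<Sum>k\<in>X. a * f k) = a * f (Min X) + (\<Sum>k\<in>X - {Min X}. a * f k)"
      using assms mX by (simp add: sum.remove)
    finally have 1: "SW c (insert x X) f = c * f x + a * f (Min X) + (\<Sum>k\<in>X - {Min X}. a * f k)" by simp
    have "SW c X f = c * f (Min X) + (\<Sum>k\<in>X - {Min X}. (if k = Min X then c else a) * f k)"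
      unfolding SW_def using assms mX by (simp add: sum.remove)
    also have "(\<Sum>k\<in>X - {Min X}. (if k = Min X then c else a) * f k) = (\<Sum>k\<in>X - {Min X}. a * f k)"
      by (intro sum.cong) auto
    finally have 2: "SW c X f = c * f (Min X) + (\<Sum>k\<in>X - {Min X}. a * f k)" .
    have "c * f (Min X) \<le> a * f (Min X)" using assms by (intro mult_right_mono) auto
    moreover have "0 \<le> c * f x" using assms by auto
    ultimately show ?thesis using 1 2 by linarith
  next
    case False
    have "Min X \<le> x" using False by linarith
    then have m: "Min (insert x X) = Min X" by (metis Min_insert assms(1) \<open>X \<noteq> {}\<close> min.absorb2)
    have ne: "x \<noteq> Min X" using mX assms by auto
    have "SW c (insert x X) f = a * f x + SW c X f"
      unfolding SW_def m using assms ne by (simp add: sum.insert)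
    moreover have "0 \<le> a * f x" using assms a_pos by auto
    ultimately show ?thesis by linarith
  qed
qed

lemma SW_mono_set:
  assumes "finite Y" "X \<subseteq> Y" "0 \<le> c" "c \<le> a" "\<And>k. 0 \<le> f k"
  shows "SW c X f \<le> SW c Y f"
proof -
  have "finite (Y - X)" using assms by auto
  have "\<And>Z. finite Z \<Longrightarrow> Z \<inter> X = {} \<Longrightarrow> SW c X f \<le> SW c (X \<union> Z) f"
  proof -
    fix Z :: "nat set" assume "finite Z" "Z \<inter> X = {}"
    then show "SW c X f \<le> SW c (X \<union> Z) f"
    proof (induction Z rule: finite_induct)
      case empty then show ?case by simp
    next
      case (insert z Z)
      have "SW c (X \<union> Z) f \<le> SW c (insert z (X \<union> Z)) f"
        using insert assms finite_subset[OF assms(2,1)] by (intro SW_insert) auto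
      then show ?case using insert by auto
    qed
  qed
  moreover have "X \<union> (Y - X) = Y" using assms by auto
  ultimately show ?thesis using \<open>finite (Y - X)\<close> by (metis Diff_disjoint Int_commute)
qed

lemma SW_mono_fun:
  assumes "finite X" "0 \<le> c" "c \<le> a" "\<And>k. k \<in> X \<Longrightarrow> f k \<le> f' k"
  shows "SW c X f \<le> SW c X f'"
  unfolding SW_def using assms a_pos by (intro sum_mono mult_left_mono) auto

definition dd :: "nat \<Rightarrow> (nat \<Rightarrow> bool) \<Rightarrow> (nat \<Rightarrow> bool) \<Rightarrow> nat \<Rightarrow> nat" where
  "dd t C S k = card {i. k < i \<and> i < t \<and> S i \<and> \<not> C i}"

definition RX :: "nat \<Rightarrow> (nat \<Rightarrow> bool) \<Rightarrow> nat set" where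
  "RX t R = {i. 1 \<le> i \<and> i < t \<and> R i}"

lemma hat_eq:
  assumes "\<And>i. C i \<Longrightarrow> S i"
  shows "hat t R C S = (ta - la) * (W0 * g (dd t C S 0) + SW (a - W0) (RX t R) (\<lambda>k. g (dd t C S k)))"
proof -
  have d: "card {i. k < i \<and> i < t \<and> S i} - card {i. k < i \<and> i < t \<and> C i} = dd t C S k" for k
  proof -
    have "{i. k < i \<and> i < t \<and> S i \<and> \<not> C i} = {i. k < i \<and> i < t \<and> S i} - {i. k < i \<and> i < t \<and> C i}"
      by auto
    moreover have "{i. k < i \<and> i < t \<and> C i} \<subseteq> {i. k < i \<and> i < t \<and> S i}" using assms by auto
    moreover have "finite {i. k < i \<and> i < t \<and> S i}" by (rule finite_subset[of _ "{..<t}"]) auto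
    ultimately show ?thesis unfolding dd_def by (simp add: card_Diff_subset finite_subset)
  qed
  have fin: "finite (RX t R)" unfolding RX_def by (rule finite_subset[of _ "{..<t}"]) auto
  show ?thesis
    unfolding addis_hat_def Let_def d SW_def
    using sorted_sum[OF fin, of "a - W0" a "\<lambda>k. g (dd t C S k)"] by (simp add: RX_def)
qed

end


context ad begin

lemma g_anti: "m \<le> n \<Longrightarrow> g n \<le> g m"
  using lift_Suc_antimono_le[of g, OF g_noninc] by blast

definition FF :: "nat \<Rightarrow> (nat \<Rightarrow> bool) \<Rightarrow> (nat \<Rightarrow> bool) \<Rightarrow> (nat \<Rightarrow> bool) \<Rightarrow> real" where
  "FF t R C S = min la (hat t R C (\<lambda>i. S i \<or> C i))"

lemma FF_eq: "FF t R C S = min la ((ta - la) * (W0 * g (dd t C S 0) + SW (a - W0) (RX t R) (\<lambda>k. g (dd t C S k))))"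
proof -
  have "dd t C (\<lambda>i. S i \<or> C i) = dd t C S" unfolding dd_def by (intro ext arg_cong[where f=card]) auto
  then show ?thesis unfolding FF_def by (subst hat_eq) auto
qed

lemma alph_FF: "1 \<le> t \<Longrightarrow> alph P t = FF t (rej P) (\<lambda>i. P i \<le> la) (\<lambda>i. P i \<le> ta)"
proof -
  assume t: "1 \<le> t"
  have "(\<lambda>i. P i \<le> ta \<or> P i \<le> la) = (\<lambda>i. P i \<le> ta)" using la_ta by (auto intro!: ext)
  then show ?thesis unfolding FF_def alph_rej[OF t] by simp
qed

lemma fin_lt: "finite {i::nat. k < i \<and> i < t \<and> Q i}"
  by (rule finite_subset[of _ "{..<t}"]) auto

lemma FF_mono:
  assumes "\<forall>i\<in>{1..<t}. (R i \<longrightarrow> R' i) \<and> (C i \<longrightarrow> C' i) \<and> (S' i \<longrightarrow> S i)"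
  shows "FF t R C S \<le> FF t R' C' S'"
proof -
  have dd: "dd t C' S' k \<le> dd t C S k" for k
    unfolding dd_def using assms by (intro card_mono fin_lt) auto
  have fin: "finite (RX t R')" unfolding RX_def by (rule finite_subset[of _ "{..<t}"]) auto
  have "SW (a - W0) (RX t R) (\<lambda>k. g (dd t C S k)) \<le> SW (a - W0) (RX t R) (\<lambda>k. g (dd t C' S' k))"
    using W0_a W0_nn dd g_anti by (intro SW_mono_fun finite_subset[OF _ fin]) (auto simp: RX_def assms)
  also have "\<dots> \<le> SW (a - W0) (RX t R') (\<lambda>k. g (dd t C' S' k))"
    using W0_a W0_nn g_nn assms by (intro SW_mono_set fin) (auto simp: RX_def)
  finally have 1: "SW (a - W0) (RX t R) (\<lambda>k. g (dd t C S k)) \<le> SW (a - W0) (RX t R') (\<lambda>k. g (dd t C' S' k))" .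
  have 2: "W0 * g (dd t C S 0) \<le> W0 * g (dd t C' S' 0)"
    using W0_nn dd g_anti by (intro mult_left_mono) auto
  show ?thesis unfolding FF_eq using 1 2 la_ta
    by (intro min.mono order.refl mult_left_mono) auto
qed

lemma FF_local:
  assumes "\<forall>i\<in>{1..<t}. R i = R' i \<and> C i = C' i \<and> S i = S' i"
  shows "FF t R C S = FF t R' C' S'"
  unfolding FF_def using assms by (intro arg_cong2[where f=min] refl hat_local) auto

lemma part1: "1 \<le> t \<Longrightarrow> \<exists>f. monotone_past t f \<and>
        (\<forall>P. alph P t = f (rej P) (\<lambda>i. P i \<le> la) (\<lambda>i. P i \<le> ta))"
  by (rule exI[of _ "FF t"]) (auto simp: monotone_past_def alph_FF intro: FF_local FF_mono)

lemma alph_le_la: "alph P t \<le> la"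
  unfolding addis_alpha_def by simp

lemma SW_nn: "(\<And>k. 0 \<le> f k) \<Longrightarrow> 0 \<le> SW (a - W0) X f"
  unfolding SW_def using W0_a a_pos by (intro sum_nonneg mult_nonneg_nonneg) auto

lemma FF_nn: "0 \<le> FF t R C S"
proof -
  have "0 \<le> SW (a - W0) (RX t R) (\<lambda>k. g (dd t C S k))" by (rule SW_nn) (rule g_nn)
  moreover have "0 \<le> W0 * g (dd t C S 0)" using W0_nn g_nn by simp
  ultimately have "0 \<le> (ta - la) * (W0 * g (dd t C S 0) + SW (a - W0) (RX t R) (\<lambda>k. g (dd t C S k)))"
    using la_ta by simp
  then show ?thesis unfolding FF_eq using la_nn by simp
qed

lemma alph_nn: "1 \<le> t \<Longrightarrow> 0 \<le> alph P t"
  using alph_FF FF_nn by simp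

lemma count_sum_eq: "finite (V::nat set) \<Longrightarrow> (\<Sum>j\<in>V. g (card {i\<in>V. i < j})) = (\<Sum>m<card V. g m)"
proof (induction V rule: finite_linorder_max_induct)
  case empty then show ?case by simp
next
  case (insert b A)
  have 1: "(\<Sum>j\<in>A. g (card {i\<in>insert b A. i < j})) = (\<Sum>j\<in>A. g (card {i\<in>A. i < j}))"
    using insert by (intro sum.cong) (auto intro!: arg_cong[where f=g] arg_cong[where f=card])
  have 2: "{i\<in>insert b A. i < b} = A" using insert by auto
  have "b \<notin> A" using insert by auto
  then show ?case using insert 1 2 by (simp add: sum.insert)
qed

lemma count_sum_le: "finite (V::nat set) \<Longrightarrow> (\<Sum>j\<in>V. g (card {i\<in>V. i < j})) \<le> 1"
proof -
  assume "finite V"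
  have "(\<Sum>m<card V. g m) \<le> suminf g"
    using g_sum g_nn by (intro sum_le_suminf) (auto simp: sums_iff)
  then show ?thesis using count_sum_eq[OF \<open>finite V\<close>] g_sum by (simp add: sums_iff)
qed

lemma Min_downward:
  assumes "finite Y" "X \<subseteq> Y" "X \<noteq> {}" "\<And>x y. x \<in> X \<Longrightarrow> y \<in> Y \<Longrightarrow> y \<le> x \<Longrightarrow> y \<in> X"
  shows "Min X = Min Y"
proof -
  have fX: "finite X" using finite_subset[OF assms(2,1)] .
  have Y: "Y \<noteq> {}" using assms by auto
  obtain x where x: "x \<in> X" using assms by auto
  have "Min Y \<le> x" using x assms by auto
  then have "Min Y \<in> X" using assms(4)[OF x] Y assms by auto
  then have "Min X \<le> Min Y" using fX by auto
  moreover have "Min Y \<le> Min X" using assms fX by (intro Min_antimono) auto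
  ultimately show ?thesis by simp
qed

end


context ad begin

abbreviation "Rset \<equiv> addis_Rset a ta la W0 g"

lemma num_le: "(\<Sum>j = 1..T. alph P j * (if la < P j \<and> P j \<le> ta then 1 else 0) / (ta - la))
    \<le> a * real (max (card (Rset P T)) 1)"
proof -
  define U where "U i \<longleftrightarrow> la < P i \<and> P i \<le> ta" for i
  define C where "C i \<longleftrightarrow> P i \<le> la" for i
  define S where "S i \<longleftrightarrow> P i \<le> ta" for i
  define Rt where "Rt = Rset P T"
  define w where "w k = (if k = Min Rt then a - W0 else a)" for k
  define ind where "ind j = (if la < P j \<and> P j \<le> ta then 1 else (0::real))" for j
  define V where "V k = {j \<in> {1..T}. U j \<and> k < j}" for k
  define BB where "BB k = (\<Sum>j\<in>V k. g (dd j C S k))" for k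
  have finRt: "finite Rt" unfolding Rt_def addis_Rset_def by (rule finite_subset[of _ "{1..T}"]) auto
  have Rt_le: "k \<in> Rt \<Longrightarrow> 1 \<le> k \<and> k \<le> T" for k unfolding Rt_def addis_Rset_def by auto
  have w_nn: "0 \<le> w k" for k unfolding w_def using W0_a a_pos by auto
  have dd_U: "dd t C S k = card {i. k < i \<and> i < t \<and> U i}" for t k
    unfolding dd_def C_def S_def U_def by (intro arg_cong[where f=card]) auto
  have BB_le: "BB k \<le> 1" for k
  proof -
    have "BB k = (\<Sum>j\<in>V k. g (card {i\<in>V k. i < j}))"
      unfolding BB_def dd_U
      by (intro sum.cong refl arg_cong[where f=g] arg_cong[where f=card]) (auto simp: V_def)
    also have "\<dots> \<le> 1" by (rule count_sum_le) (simp add: V_def)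
    finally show ?thesis .
  qed
  have BB_nn: "0 \<le> BB k" for k unfolding BB_def using g_nn by (intro sum_nonneg) auto
  have step1: "alph P j * ind j / (ta - la) \<le>
      ind j * (W0 * g (dd j C S 0) + (\<Sum>k\<in>Rt. if k < j then w k * g (dd j C S k) else 0))"
    if j: "j \<in> {1..T}" for j
  proof -
    have RX: "RX j (rej P) = {k \<in> Rt. k < j}"
      using j unfolding RX_def Rt_def addis_Rset_def by auto
    have SWe: "SW (a - W0) (RX j (rej P)) (\<lambda>k. g (dd j C S k))
        = (\<Sum>k\<in>Rt. if k < j then w k * g (dd j C S k) else 0)"
    proof (cases "RX j (rej P) = {}")
      case True
      then have "\<forall>k\<in>Rt. \<not> k < j" using RX by auto
      then show ?thesis using True by (simp add: SW_def)
    next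
      case False
      have "Min (RX j (rej P)) = Min Rt"
        using False finRt unfolding RX by (intro Min_downward) auto
      then have "SW (a - W0) (RX j (rej P)) (\<lambda>k. g (dd j C S k)) = (\<Sum>k\<in>{k \<in> Rt. k < j}. w k * g (dd j C S k))"
        unfolding SW_def w_def RX by simp
      also have "\<dots> = (\<Sum>k\<in>Rt. if k < j then w k * g (dd j C S k) else 0)"
        using finRt by (simp add: sum.inter_filter)
      finally show ?thesis .
    qed
    have al: "alph P j \<le> (ta - la) * (W0 * g (dd j C S 0) + (\<Sum>k\<in>Rt. if k < j then w k * g (dd j C S k) else 0))"
      using j alph_FF[of j P] unfolding FF_eq SWe[symmetric] C_def[symmetric] S_def[symmetric]
      by (simp add: C_def[abs_def] S_def[abs_def])
    have "alph P j * ind j / (ta - la) = ind j * (alph P j / (ta - la))" by simp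
    also have "\<dots> \<le> ind j * (W0 * g (dd j C S 0) + (\<Sum>k\<in>Rt. if k < j then w k * g (dd j C S k) else 0))"
      using al la_ta by (intro mult_left_mono) (auto simp: ind_def pos_divide_le_eq mult.commute)
    finally show ?thesis .
  qed
  have "(\<Sum>j = 1..T. alph P j * ind j / (ta - la)) \<le>
        (\<Sum>j = 1..T. ind j * (W0 * g (dd j C S 0) + (\<Sum>k\<in>Rt. if k < j then w k * g (dd j C S k) else 0)))"
    using step1 by (intro sum_mono) auto
  also have "\<dots> = W0 * (\<Sum>j = 1..T. ind j * g (dd j C S 0))
       + (\<Sum>k\<in>Rt. w k * (\<Sum>j = 1..T. if U j \<and> k < j then g (dd j C S k) else 0))"
  proof -
    have e: "ind j * (W0 * g (dd j C S 0) + (\<Sum>k\<in>Rt. if k < j then w k * g (dd j C S k) else 0))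
        = W0 * (ind j * g (dd j C S 0)) + (\<Sum>k\<in>Rt. w k * (if U j \<and> k < j then g (dd j C S k) else 0))" for j
      unfolding ind_def U_def by (cases "la < P j \<and> P j \<le> ta") (auto simp: distrib_left sum_distrib_left intro!: sum.cong)
    have "(\<Sum>j = 1..T. ind j * (W0 * g (dd j C S 0) + (\<Sum>k\<in>Rt. if k < j then w k * g (dd j C S k) else 0)))
        = W0 * (\<Sum>j = 1..T. ind j * g (dd j C S 0)) + (\<Sum>j = 1..T. \<Sum>k\<in>Rt. w k * (if U j \<and> k < j then g (dd j C S k) else 0))"
      unfolding e by (simp add: sum.distrib sum_distrib_left)
    also have "(\<Sum>j = 1..T. \<Sum>k\<in>Rt. w k * (if U j \<and> k < j then g (dd j C S k) else 0))
        = (\<Sum>k\<in>Rt. w k * (\<Sum>j = 1..T. if U j \<and> k < j then g (dd j C S k) else 0))"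
      by (subst sum.swap) (simp add: sum_distrib_left)
    finally show ?thesis .
  qed
  also have "(\<Sum>j = 1..T. ind j * g (dd j C S 0)) = BB 0"
  proof -
    have "(\<Sum>j = 1..T. ind j * g (dd j C S 0)) = (\<Sum>j=1..T. if U j \<and> 0 < j then g (dd j C S 0) else 0)"
      by (intro sum.cong) (auto simp: ind_def U_def)
    also have "\<dots> = BB 0" unfolding BB_def V_def by (rule sum.inter_filter[symmetric]) simp
    finally show ?thesis .
  qed
  also have "(\<lambda>k. (\<Sum>j = 1..T. if U j \<and> k < j then g (dd j C S k) else 0)) = BB"
  proof
    fix k show "(\<Sum>j = 1..T. if U j \<and> k < j then g (dd j C S k) else 0) = BB k"
      unfolding BB_def V_def by (rule sum.inter_filter[symmetric]) simp
  qed
  also have "W0 * BB 0 + (\<Sum>k\<in>Rt. w k * BB k) \<le> W0 * 1 + (\<Sum>k\<in>Rt. w k * 1)"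
    using BB_le w_nn W0_nn by (intro add_mono mult_left_mono sum_mono) auto
  also have "W0 * 1 + (\<Sum>k\<in>Rt. w k * 1) \<le> a * real (max (card Rt) 1)"
  proof (cases "Rt = {}")
    case True then show ?thesis using W0_a by simp
  next
    case False
    have m: "Min Rt \<in> Rt" using False finRt by simp
    have c1: "card Rt \<ge> 1" using False finRt by (simp add: Suc_le_eq card_gt_0_iff)
    have "(\<Sum>k\<in>Rt. w k * 1) = w (Min Rt) + (\<Sum>k\<in>Rt - {Min Rt}. w k)"
      using m finRt by (simp add: sum.remove)
    also have "(\<Sum>k\<in>Rt - {Min Rt}. w k) = (\<Sum>k\<in>Rt - {Min Rt}. a)"
      unfolding w_def by (intro sum.cong) auto
    also have "\<dots> = a * (real (card Rt) - 1)" using m finRt c1 by (simp add: card_Diff_singleton of_nat_diff)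
    finally have "(\<Sum>k\<in>Rt. w k * 1) = a - W0 + a * (real (card Rt) - 1)" by (simp add: w_def)
    with c1 show ?thesis by (simp add: algebra_simps max_def)
  qed
  finally show ?thesis unfolding Rt_def ind_def .
qed

lemma part3: "addis_FDP_hat a ta la W0 g P T \<le> a"
  unfolding addis_FDP_hat_def using num_le[where P=P and T=T] by (simp add: divide_le_eq)

end



lemma fin_event:
  assumes "finite I" "\<And>x. x \<in> I \<Longrightarrow> {\<omega>\<in>space N. b x \<omega>} \<in> sets N"
  shows "{\<omega>\<in>space N. {x\<in>I. b x \<omega>} = A} \<in> sets N"
  using assms
proof (induction I arbitrary: A rule: finite_induct)
  case empty
  then show ?case by (cases "A = {}") auto
next
  case (insert y I)
  have "{\<omega>\<in>space N. {x\<in>insert y I. b x \<omega>} = A}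
      = {\<omega>\<in>space N. (b y \<omega> \<longleftrightarrow> y \<in> A)} \<inter> {\<omega>\<in>space N. {x\<in>I. b x \<omega>} = A - {y}}"
    using insert(2) by (auto; blast)
  moreover have "{\<omega>\<in>space N. (b y \<omega> \<longleftrightarrow> y \<in> A)} \<in> sets N"
  proof (cases "y \<in> A")
    case True then show ?thesis using insert by simp
  next
    case False
    then have "{\<omega>\<in>space N. (b y \<omega> \<longleftrightarrow> y \<in> A)} = space N - {\<omega>\<in>space N. b y \<omega>}" by auto
    then show ?thesis using insert by auto
  qed
  ultimately show ?case using insert by auto
qed

lemma fin_meas:
  assumes "finite I" "\<And>x. x \<in> I \<Longrightarrow> {\<omega>\<in>space N. b x \<omega>} \<in> sets N" "\<And>A. h A \<in> space M'"
  shows "(\<lambda>\<omega>. h {x\<in>I. b x \<omega>}) \<in> measurable N M'"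
proof (rule measurableI)
  fix \<omega> show "h {x\<in>I. b x \<omega>} \<in> space M'" using assms by simp
next
  fix B assume "B \<in> sets M'"
  have "(\<lambda>\<omega>. h {x\<in>I. b x \<omega>}) -` B \<inter> space N = (\<Union>A\<in>{A\<in>Pow I. h A \<in> B}. {\<omega>\<in>space N. {x\<in>I. b x \<omega>} = A})"
    by auto
  also have "\<dots> \<in> sets N" using assms by (intro sets.finite_UN fin_event) auto
  finally show "(\<lambda>\<omega>. h {x\<in>I. b x \<omega>}) -` B \<inter> space N \<in> sets N" .
qed

context ad begin

definition bvec :: "(nat \<Rightarrow> real) \<Rightarrow> nat \<times> nat \<Rightarrow> bool" where
  "bvec P x = (if fst x = 0 then rej P (snd x) else if fst x = 1 then P (snd x) \<le> la else P (snd x) \<le> ta)"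

definition II :: "nat \<Rightarrow> (nat \<times> nat) set" where
  "II t = {0,1,2} \<times> {1..<t}"

definition hf :: "nat \<Rightarrow> (nat \<times> nat) set \<Rightarrow> real" where
  "hf t A = FF t (\<lambda>i. (0,i) \<in> A) (\<lambda>i. (1,i) \<in> A) (\<lambda>i. (2,i) \<in> A)"

lemma finite_II: "finite (II t)" unfolding II_def by simp

lemma alph_code: "1 \<le> t \<Longrightarrow> alph P t = hf t {x\<in>II t. bvec P x}"
  unfolding hf_def alph_FF by (intro FF_local) (auto simp: II_def bvec_def)

lemma hf_range: "0 \<le> hf t A" "hf t A \<le> la"
  unfolding hf_def using FF_nn by (auto simp: FF_def)

lemma alph0: "alph P 0 = alph P' 0"
  unfolding addis_alpha_def by (intro arg_cong2[where f=min] refl hat_local) auto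

lemma hist_Suc_rej: "hist P (Suc s) = (hist P s)(Suc s := rej P (Suc s))"
  by (simp add: addis_rej_def addis_alpha_def)

lemma rej_meas:
  assumes Q: "\<And>i. Q i \<in> borel_measurable N"
  shows "{\<omega>\<in>space N. rej (\<lambda>i. Q i \<omega>) n} \<in> sets N"
proof (induction n rule: less_induct)
  case (less n)
  show ?case
  proof (cases "n = 0")
    case True
    have "{\<omega>\<in>space N. rej (\<lambda>i. Q i \<omega>) n} = {\<omega>\<in>space N. Q 0 \<omega> \<le> alph (\<lambda>_. 0) 0}"
      unfolding True addis_rej_def using alph0 by metis
    also have "\<dots> \<in> sets N" using Q by measurable
    finally show ?thesis .
  next
    case False
    have b: "{\<omega>\<in>space N. bvec (\<lambda>i. Q i \<omega>) x} \<in> sets N" if "x \<in> II n" for x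
    proof -
      have xI: "fst x \<in> {0,1,2}" "1 \<le> snd x" "snd x < n" using that unfolding II_def by (auto simp: mem_Times_iff)
      define k where "k = fst x"
      define i where "i = snd x"
      have x: "x = (k, i)" "k \<in> {0,1,2}" "i < n" using xI by (auto simp: k_def i_def)
      show ?thesis
      proof (cases "k = 0")
        case True then show ?thesis using less.IH[OF x(3)] x by (simp add: bvec_def)
      next
        case False
        then show ?thesis using x Q by (simp add: bvec_def) measurable
      qed
    qed
    have "(\<lambda>\<omega>. hf n {x\<in>II n. bvec (\<lambda>i. Q i \<omega>) x}) \<in> borel_measurable N"
      by (rule fin_meas[OF finite_II b]) auto
    then have "{\<omega>\<in>space N. Q n \<omega> \<le> hf n {x\<in>II n. bvec (\<lambda>i. Q i \<omega>) x}} \<in> sets N"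
      using Q by measurable
    moreover have "{\<omega>\<in>space N. rej (\<lambda>i. Q i \<omega>) n} = {\<omega>\<in>space N. Q n \<omega> \<le> hf n {x\<in>II n. bvec (\<lambda>i. Q i \<omega>) x}}"
      using False by (simp add: addis_rej_def alph_code)
    ultimately show ?thesis by simp
  qed
qed

lemma bvec_meas:
  assumes Q: "\<And>i. Q i \<in> borel_measurable N"
  shows "{\<omega>\<in>space N. bvec (\<lambda>i. Q i \<omega>) x} \<in> sets N"
proof (cases "fst x = 0")
  case True then show ?thesis using rej_meas[OF Q] by (simp add: bvec_def)
next
  case False then show ?thesis using Q by (simp add: bvec_def) measurable
qed

lemma vec_meas:
  assumes Q: "\<And>i. Q i \<in> borel_measurable N" and "finite I" "\<And>A. h A \<in> space M'"
  shows "(\<lambda>\<omega>. h {x\<in>I. bvec (\<lambda>i. Q i \<omega>) x}) \<in> measurable N M'"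
  using assms bvec_meas[OF Q] by (intro fin_meas) auto

lemma alph_meas:
  assumes Q: "\<And>i. Q i \<in> borel_measurable N"
  shows "(\<lambda>\<omega>. alph (\<lambda>i. Q i \<omega>) t) \<in> borel_measurable N"
proof (cases "t = 0")
  case True
  then have "(\<lambda>\<omega>. alph (\<lambda>i. Q i \<omega>) t) = (\<lambda>_. alph (\<lambda>_. 0) 0)" using alph0 by metis
  then show ?thesis by simp
next
  case False
  then have "(\<lambda>\<omega>. alph (\<lambda>i. Q i \<omega>) t) = (\<lambda>\<omega>. hf t {x\<in>II t. bvec (\<lambda>i. Q i \<omega>) x})"
    by (simp add: alph_code)
  then show ?thesis using vec_meas[of Q N "II t" "hf t" borel] Q finite_II by simp
qed

definition RI :: "nat \<Rightarrow> (nat \<times> nat) set" where "RI T = {0} \<times> {1..T}"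

lemma Rset_code: "Rset P T = snd ` {x\<in>RI T. bvec P x}"
  unfolding addis_Rset_def RI_def bvec_def by force

lemma finite_RI: "finite (RI T)" unfolding RI_def by simp

lemma Rset_meas:
  assumes Q: "\<And>i. Q i \<in> borel_measurable N"
  shows "(\<lambda>\<omega>. h (Rset (\<lambda>i. Q i \<omega>) T)) \<in> borel_measurable N"
  unfolding Rset_code using vec_meas[of Q N "RI T" "\<lambda>B. h (snd ` B)" borel] Q finite_RI by simp

lemma hist_agree_prefix: "(\<forall>i\<in>{1..s}. P i = P' i) \<Longrightarrow> hist P s = hist P' s"
proof (induction s)
  case 0 then show ?case by simp
next
  case (Suc s)
  have h: "hist P s = hist P' s" using Suc by auto
  have "hat (Suc s) (hist P s) (\<lambda>i. P i \<le> la) (\<lambda>i. P i \<le> ta) = hat (Suc s) (hist P' s) (\<lambda>i. P' i \<le> la) (\<lambda>i. P' i \<le> ta)"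
    using Suc.prems h by (intro hat_local) auto
  then show ?case using Suc.prems h by simp
qed

lemma alph_agree_prefix: "(\<forall>k\<in>{1..<t}. P k = P' k) \<Longrightarrow> alph P t = alph P' t"
proof -
  assume a: "\<forall>k\<in>{1..<t}. P k = P' k"
  have h: "hist P (t - 1) = hist P' (t - 1)" using a by (intro hist_agree_prefix) auto
  show ?thesis unfolding addis_alpha_def h using a by (intro arg_cong2[where f=min] refl hat_local) auto
qed

lemma bvec_agree_prefix: "x \<in> II t \<Longrightarrow> (\<forall>k\<in>{1..<t}. P k = P' k) \<Longrightarrow> bvec P x = bvec P' x"
proof -
  assume x: "x \<in> II t" and a: "\<forall>k\<in>{1..<t}. P k = P' k"
  have xI: "fst x \<in> {0,1,2}" "1 \<le> snd x" "snd x < t" using x unfolding II_def by (auto simp: mem_Times_iff)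
  define k where "k = fst x"
  define i where "i = snd x"
  have ki: "x = (k,i)" "1 \<le> i" "i < t" using xI by (auto simp: k_def i_def)
  have "rej P i = rej P' i"
    using ki a unfolding rej_hist[OF ki(2)] by (subst hist_agree_prefix[of i P P']) auto
  then show ?thesis using ki a by (auto simp: bvec_def)
qed

lemma hist_agree_except:
  assumes "\<And>i. 1 \<le> i \<Longrightarrow> i \<noteq> j \<Longrightarrow> P i = P' i" "(P j \<le> la) = (P' j \<le> la)" "(P j \<le> ta) = (P' j \<le> ta)"
    "1 \<le> j \<Longrightarrow> rej P j = rej P' j"
  shows "hist P s = hist P' s"
proof (induction s)
  case 0 then show ?case by simp
next
  case (Suc s)
  have "rej P (Suc s) = rej P' (Suc s)"
  proof (cases "Suc s = j")
    case True then show ?thesis using assms by auto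
  next
    case False
    have "hat (Suc s) (hist P s) (\<lambda>i. P i \<le> la) (\<lambda>i. P i \<le> ta) = hat (Suc s) (hist P' s) (\<lambda>i. P' i \<le> la) (\<lambda>i. P' i \<le> ta)"
      using assms Suc.IH by (intro hat_local) (metis atLeastLessThan_iff)
    then show ?thesis using False assms(1)[of "Suc s"] by (simp add: addis_rej_def addis_alpha_def)
  qed
  then show ?case using Suc.IH by (simp only: hist_Suc_rej)
qed

lemma rej_agree_except:
  assumes "\<And>i. 1 \<le> i \<Longrightarrow> i \<noteq> j \<Longrightarrow> P i = P' i" "(P j \<le> la) = (P' j \<le> la)" "(P j \<le> ta) = (P' j \<le> ta)"
    "1 \<le> j \<Longrightarrow> rej P j = rej P' j" "1 \<le> n"
  shows "rej P n = rej P' n"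
  using hist_agree_except[OF assms(1-4), of n] rej_hist[OF assms(5)] by simp

lemma rej_mono_except:
  assumes "\<And>i. 1 \<le> i \<Longrightarrow> i \<noteq> j \<Longrightarrow> P i = P' i" "P j \<le> la \<Longrightarrow> P' j \<le> la" "P' j \<le> ta \<Longrightarrow> P j \<le> ta"
    "1 \<le> j \<Longrightarrow> rej P j \<Longrightarrow> rej P' j"
  shows "1 \<le> n \<Longrightarrow> rej P n \<Longrightarrow> rej P' n"
proof (induction n rule: less_induct)
  case (less n)
  show ?case
  proof (cases "n = j")
    case True then show ?thesis using less assms by auto
  next
    case False
    have "FF n (rej P) (\<lambda>i. P i \<le> la) (\<lambda>i. P i \<le> ta) \<le> FF n (rej P') (\<lambda>i. P' i \<le> la) (\<lambda>i. P' i \<le> ta)"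
      using less.IH assms by (intro FF_mono) (metis atLeastLessThan_iff order.refl)
    then show ?thesis using less.prems False assms(1)[of n] by (simp add: addis_rej_def alph_FF)
  qed
qed

end



lemma su_aux:
  fixes c m y :: real
  assumes "c < 1" "0 \<le> c" "0 \<le> m" "\<And>x. c < x \<Longrightarrow> x < 1 \<Longrightarrow> y \<le> x * m"
  shows "y \<le> c * m"
proof (rule ccontr)
  assume n: "\<not> y \<le> c * m"
  show False
  proof (cases "m = 0")
    case True
    have "y \<le> ((c + 1)/2) * m" using assms by (intro assms(4)) auto
    then show False using n True by simp
  next
    case False
    then have mp: "0 < m" using assms by simp
    have "c < y / m" using n mp by (simp add: field_simps)
    then obtain x where x: "c < x" "x < min 1 (y / m)" using assms(1) dense[of c "min 1 (y/m)"] by auto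
    have "y \<le> x * m" using x by (intro assms(4)) auto
    moreover have "x * m < y" using x mp by (simp add: field_simps)
    ultimately show False by simp
  qed
qed

locale adM = ad + prob_space +
  fixes Pv :: "nat \<Rightarrow> 'a \<Rightarrow> real"
  assumes Pv_meas: "\<And>j. Pv j \<in> borel_measurable M"
    and Pv_range: "\<And>j \<omega>. \<omega> \<in> space M \<Longrightarrow> 0 \<le> Pv j \<omega> \<and> Pv j \<omega> \<le> 1"
    and ta_le1: "ta \<le> 1"
begin

lemma le_set[measurable]: "{\<omega>\<in>space M. Pv j \<omega> \<le> c} \<in> sets M"
  using Pv_meas by measurable

abbreviation "cuc E j \<equiv> (\<forall>x\<in>{0<..<1}. \<forall>\<tau>'\<in>{0<..<1}.
        measure M ({\<omega> \<in> space M. Pv j \<omega> / \<tau>' \<le> x \<and> Pv j \<omega> \<le> \<tau>'} \<inter> E)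
          \<le> x * measure M ({\<omega> \<in> space M. Pv j \<omega> \<le> \<tau>'} \<inter> E))"

lemma su_base:
  assumes cuc: "cuc E j" and E: "E \<in> sets M" and u: "0 \<le> u" "u < ta"
  shows "measure M ({\<omega>\<in>space M. Pv j \<omega> \<le> u} \<inter> E) \<le> (u / ta) * measure M ({\<omega>\<in>space M. Pv j \<omega> \<le> ta} \<inter> E)"
proof (rule su_aux)
  show "u / ta < 1" "0 \<le> u / ta" using u ta_pos by auto
  show "0 \<le> measure M ({\<omega>\<in>space M. Pv j \<omega> \<le> ta} \<inter> E)" by simp
  fix x assume x: "u / ta < x" "x < 1"
  have x0: "0 < x" using x u ta_pos by (smt (verit) divide_nonneg_pos)
  show "measure M ({\<omega>\<in>space M. Pv j \<omega> \<le> u} \<inter> E) \<le> x * measure M ({\<omega>\<in>space M. Pv j \<omega> \<le> ta} \<inter> E)"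
  proof (cases "ta < 1")
    case True
    have "measure M ({\<omega>\<in>space M. Pv j \<omega> \<le> u} \<inter> E) \<le> measure M ({\<omega> \<in> space M. Pv j \<omega> / ta \<le> x \<and> Pv j \<omega> \<le> ta} \<inter> E)"
    proof (rule finite_measure_mono)
      show "{\<omega>\<in>space M. Pv j \<omega> \<le> u} \<inter> E \<subseteq> {\<omega> \<in> space M. Pv j \<omega> / ta \<le> x \<and> Pv j \<omega> \<le> ta} \<inter> E"
      proof safe
        fix \<omega> assume "Pv j \<omega> \<le> u"
        then have "Pv j \<omega> / ta \<le> u / ta" using ta_pos by (simp add: divide_right_mono)
        then show "Pv j \<omega> / ta \<le> x" using x by simp
        show "Pv j \<omega> \<le> ta" using \<open>Pv j \<omega> \<le> u\<close> u by simp
      qed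
      show "{\<omega> \<in> space M. Pv j \<omega> / ta \<le> x \<and> Pv j \<omega> \<le> ta} \<inter> E \<in> sets M"
        using E Pv_meas by measurable
    qed
    also have "\<dots> \<le> x * measure M ({\<omega>\<in>space M. Pv j \<omega> \<le> ta} \<inter> E)"
      using cuc x0 x True ta_pos by auto
    finally show ?thesis .
  next
    case False
    then have ta1: "ta = 1" using ta_le1 by simp
    define t' where "t' = (u / x + 1) / 2"
    have ux: "u / x < 1" using x ta1 x0 by (simp add: divide_less_eq)
    have ux0: "0 \<le> u / x" using u x0 by simp
    define y where "y = u / x"
    have yy: "y < 1" "0 \<le> y" using ux ux0 unfolding y_def by auto
    have t'0: "t' = (y + 1) / 2" unfolding t'_def y_def ..
    have t'1: "0 < t'" using yy unfolding t'0 by simp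
    have t'2: "t' < 1" using yy unfolding t'0 by simp
    have t'3: "u / x < t'" using yy unfolding t'0 y_def[symmetric] by simp
    note t' = t'1 t'2 t'3
    have ut: "u < x * t'" using t'(3) x0 by (simp add: divide_less_eq mult.commute)
    have "u \<le> u / x" using u x0 x by (simp add: le_divide_eq mult_left_le)
    then have ut2: "u < t'" using t' by simp
    have "measure M ({\<omega>\<in>space M. Pv j \<omega> \<le> u} \<inter> E) \<le> measure M ({\<omega> \<in> space M. Pv j \<omega> / t' \<le> x \<and> Pv j \<omega> \<le> t'} \<inter> E)"
    proof (rule finite_measure_mono)
      show "{\<omega>\<in>space M. Pv j \<omega> \<le> u} \<inter> E \<subseteq> {\<omega> \<in> space M. Pv j \<omega> / t' \<le> x \<and> Pv j \<omega> \<le> t'} \<inter> E"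
      proof safe
        fix \<omega> assume "Pv j \<omega> \<le> u"
        then have "Pv j \<omega> \<le> x * t'" using ut by simp
        then show "Pv j \<omega> / t' \<le> x" using t' by (simp add: divide_le_eq)
        show "Pv j \<omega> \<le> t'" using \<open>Pv j \<omega> \<le> u\<close> ut2 by simp
      qed
      show "{\<omega> \<in> space M. Pv j \<omega> / t' \<le> x \<and> Pv j \<omega> \<le> t'} \<inter> E \<in> sets M"
        using E Pv_meas by measurable
    qed
    also have "\<dots> \<le> x * measure M ({\<omega>\<in>space M. Pv j \<omega> \<le> t'} \<inter> E)"
      using cuc x0 x t' by auto
    also have "\<dots> \<le> x * measure M ({\<omega>\<in>space M. Pv j \<omega> \<le> ta} \<inter> E)"
      using x0 t' ta1 E by (intro mult_left_mono finite_measure_mono) auto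
    finally show ?thesis .
  qed
qed

lemma su:
  assumes cuc: "cuc E j" and E: "E \<in> sets M" and v: "0 \<le> v" "v \<le> la"
  shows "measure M ({\<omega>\<in>space M. Pv j \<omega> \<le> v} \<inter> E)
      \<le> v / (ta - la) * measure M ({\<omega>\<in>space M. la < Pv j \<omega> \<and> Pv j \<omega> \<le> ta} \<inter> E)"
proof -
  define mt where "mt = measure M ({\<omega>\<in>space M. Pv j \<omega> \<le> ta} \<inter> E)"
  define ml where "ml = measure M ({\<omega>\<in>space M. Pv j \<omega> \<le> la} \<inter> E)"
  define mv where "mv = measure M ({\<omega>\<in>space M. Pv j \<omega> \<le> v} \<inter> E)"
  have 1: "mv \<le> (v / ta) * mt" unfolding mv_def mt_def using su_base[OF cuc E v(1)] v la_ta by simp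
  have 2: "ml \<le> (la / ta) * mt" unfolding ml_def mt_def using su_base[OF cuc E la_nn la_ta] .
  have "{\<omega>\<in>space M. la < Pv j \<omega> \<and> Pv j \<omega> \<le> ta} \<inter> E
      = ({\<omega>\<in>space M. Pv j \<omega> \<le> ta} \<inter> E) - ({\<omega>\<in>space M. Pv j \<omega> \<le> la} \<inter> E)" by auto
  moreover have "measure M (({\<omega>\<in>space M. Pv j \<omega> \<le> ta} \<inter> E) - ({\<omega>\<in>space M. Pv j \<omega> \<le> la} \<inter> E)) = mt - ml"
    unfolding mt_def ml_def using E la_ta by (intro finite_measure_Diff) auto
  ultimately have 3: "measure M ({\<omega>\<in>space M. la < Pv j \<omega> \<and> Pv j \<omega> \<le> ta} \<inter> E) = mt - ml" by simp
  have mt0: "0 \<le> mt" unfolding mt_def by simp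
  have "v / (ta - la) * (mt - ml) \<ge> v / (ta - la) * (mt - (la / ta) * mt)"
    using 2 v la_ta by (intro mult_left_mono) auto
  moreover have "v / (ta - la) * (mt - (la / ta) * mt) = (v / ta) * mt"
    using la_ta ta_pos by (simp add: field_simps)
  ultimately show ?thesis using 1 3 unfolding mv_def by simp
qed

end


context adM begin

lemma int_bounded:
  fixes f :: "'a \<Rightarrow> real"
  assumes "f \<in> borel_measurable M" "\<And>\<omega>. \<omega> \<in> space M \<Longrightarrow> \<bar>f \<omega>\<bar> \<le> B"
  shows "integrable M f"
  using assms by (intro integrable_const_bound[where B=B]) auto

lemma int_ind: "A \<in> sets M \<Longrightarrow> integrable M (indicator A :: 'a \<Rightarrow> real)"
  by (rule integrable_real_indicator) (auto simp: less_top[symmetric])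

lemma Pw_meas: "\<And>i. (\<lambda>\<omega>. Pv i \<omega>) \<in> borel_measurable M" using Pv_meas by simp

lemma EA_sets: "{\<omega>\<in>space M. {x\<in>I. bvec (\<lambda>i. Pv i \<omega>) x} = A} \<in> sets M" if "finite I"
  using that bvec_meas[OF Pv_meas] by (intro fin_event) auto

lemma EA_past: "{\<omega>\<in>space M. {x\<in>II j. bvec (\<lambda>i. Pv i \<omega>) x} = A} \<in> addis_past_sets M a ta la W0 g Pv j"
proof -
  define G where "G = (\<Union>i\<in>{1..<j}. {{\<omega> \<in> space M. rej (\<lambda>j. Pv j \<omega>) i},
                      {\<omega> \<in> space M. Pv i \<omega> \<le> la}, {\<omega> \<in> space M. Pv i \<omega> \<le> ta}})"
  define N where "N = sigma (space M) G"
  have G: "G \<subseteq> Pow (space M)" unfolding G_def by auto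
  have sN: "sets N = sigma_sets (space M) G" "space N = space M"
    unfolding N_def using G by (auto simp: sets_measure_of space_measure_of_conv)
  have "{\<omega>\<in>space N. {x\<in>II j. bvec (\<lambda>i. Pv i \<omega>) x} = A} \<in> sets N"
  proof (rule fin_event[OF finite_II])
    fix x assume x: "x \<in> II j"
    then have xI: "fst x \<in> {0,1,2}" "snd x \<in> {1..<j}" unfolding II_def by (auto simp: mem_Times_iff)
    define k where "k = fst x"
    define i where "i = snd x"
    have ki: "x = (k,i)" "k \<in> {0,1,2}" "i \<in> {1..<j}" using xI by (auto simp: k_def i_def)
    have "{\<omega>\<in>space M. bvec (\<lambda>i. Pv i \<omega>) x} \<in> G"
      unfolding G_def using ki by (auto simp: bvec_def)
    then show "{\<omega>\<in>space N. bvec (\<lambda>i. Pv i \<omega>) x} \<in> sets N" unfolding sN by auto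
  qed
  then show ?thesis unfolding sN addis_past_sets_def G_def by simp
qed

lemma mfdr_j:
  assumes cucj: "\<forall>E\<in>addis_past_sets M a ta la W0 g Pv j. cuc E j" and j: "1 \<le> j"
  shows "measure M {\<omega>\<in>space M. rej (\<lambda>i. Pv i \<omega>) j}
    \<le> (\<integral>\<omega>. alph (\<lambda>i. Pv i \<omega>) j * (if la < Pv j \<omega> \<and> Pv j \<omega> \<le> ta then 1 else 0) / (ta - la) \<partial>M)"
proof -
  define I where "I = II j"
  define Av where "Av \<omega> = {x\<in>I. bvec (\<lambda>i. Pv i \<omega>) x}" for \<omega>
  define EA where "EA A = {\<omega>\<in>space M. Av \<omega> = A}" for A
  define Bv where "Bv v = {\<omega>\<in>space M. Pv j \<omega> \<le> v}" for v
  define L where "L = {\<omega>\<in>space M. la < Pv j \<omega> \<and> Pv j \<omega> \<le> ta}"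
  have finI: "finite I" unfolding I_def by (rule finite_II)
  have EA: "EA A \<in> sets M" for A unfolding EA_def Av_def using EA_sets[OF finI] .
  have EAp: "EA A \<in> addis_past_sets M a ta la W0 g Pv j" for A
    unfolding EA_def Av_def I_def by (rule EA_past)
  have Bv: "Bv v \<in> sets M" for v unfolding Bv_def by simp
  have L: "L \<in> sets M" unfolding L_def using Pv_meas by measurable
  have AvI: "Av \<omega> \<in> Pow I" for \<omega> unfolding Av_def by auto
  have al: "alph (\<lambda>i. Pv i \<omega>) j = hf j (Av \<omega>)" for \<omega>
    unfolding Av_def I_def using alph_code[OF j] .
  have p1: "(indicator {\<omega>\<in>space M. rej (\<lambda>i. Pv i \<omega>) j} \<omega> :: real) = (\<Sum>A\<in>Pow I. indicator (Bv (hf j A) \<inter> EA A) \<omega>)"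
    if "\<omega> \<in> space M" for \<omega> :: 'a
  proof -
    have "(\<Sum>A\<in>Pow I. indicator (Bv (hf j A) \<inter> EA A) \<omega>)
        = (\<Sum>A\<in>Pow I. if Av \<omega> = A then indicator (Bv (hf j A)) \<omega> else (0::real))"
      using that by (intro sum.cong) (auto simp: EA_def indicator_def)
    also have "\<dots> = indicator (Bv (hf j (Av \<omega>))) \<omega>" using AvI[of \<omega>] finI by (simp add: sum.delta')
    finally have c: "(\<Sum>A\<in>Pow I. indicator (Bv (hf j A) \<inter> EA A) \<omega>) = (indicator (Bv (hf j (Av \<omega>))) \<omega> :: real)" .
    have e: "indicator {\<omega>\<in>space M. rej (\<lambda>i. Pv i \<omega>) j} \<omega> = (indicator (Bv (hf j (Av \<omega>))) \<omega> :: real)"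
    proof -
      have r: "rej (\<lambda>i. Pv i \<omega>) j \<longleftrightarrow> Pv j \<omega> \<le> hf j (Av \<omega>)" unfolding addis_rej_def al ..
      show ?thesis using that r unfolding Bv_def indicator_def by auto
    qed
    show ?thesis by (simp only: c e)
  qed
  have p2: "alph (\<lambda>i. Pv i \<omega>) j * (if la < Pv j \<omega> \<and> Pv j \<omega> \<le> ta then 1 else 0) / (ta - la)
      = (\<Sum>A\<in>Pow I. hf j A / (ta - la) * indicator (L \<inter> EA A) \<omega>)"
    if "\<omega> \<in> space M" for \<omega> :: 'a
  proof -
    have "(\<Sum>A\<in>Pow I. hf j A / (ta - la) * indicator (L \<inter> EA A) \<omega>)
        = (\<Sum>A\<in>Pow I. if Av \<omega> = A then hf j A / (ta - la) * indicator L \<omega> else (0::real))"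
      using that by (intro sum.cong) (auto simp: EA_def indicator_def)
    also have "\<dots> = hf j (Av \<omega>) / (ta - la) * indicator L \<omega>" using AvI[of \<omega>] finI by (simp add: sum.delta')
    finally have c: "(\<Sum>A\<in>Pow I. hf j A / (ta - la) * indicator (L \<inter> EA A) \<omega>) = hf j (Av \<omega>) / (ta - la) * indicator L \<omega>" .
    have e: "alph (\<lambda>i. Pv i \<omega>) j * (if la < Pv j \<omega> \<and> Pv j \<omega> \<le> ta then 1 else 0) / (ta - la) = hf j (Av \<omega>) / (ta - la) * indicator L \<omega>"
      using that unfolding al L_def indicator_def by auto
    show ?thesis by (simp only: c e)
  qed
  have "measure M {\<omega>\<in>space M. rej (\<lambda>i. Pv i \<omega>) j} = (\<integral>\<omega>. indicator {\<omega>\<in>space M. rej (\<lambda>i. Pv i \<omega>) j} \<omega> \<partial>M)"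
    by (simp add: Int_absorb2)
  also have "\<dots> = (\<integral>\<omega>. (\<Sum>A\<in>Pow I. indicator (Bv (hf j A) \<inter> EA A) \<omega>) \<partial>M)"
    by (rule Bochner_Integration.integral_cong[OF refl]) (use p1 in auto)
  also have "\<dots> = (\<Sum>A\<in>Pow I. measure M (Bv (hf j A) \<inter> EA A))"
    using Bv EA by (subst Bochner_Integration.integral_sum) (auto simp: Int_absorb2 intro!: int_ind)
  also have "\<dots> \<le> (\<Sum>A\<in>Pow I. hf j A / (ta - la) * measure M (L \<inter> EA A))"
  proof (rule sum_mono)
    fix A assume "A \<in> Pow I"
    show "measure M (Bv (hf j A) \<inter> EA A) \<le> hf j A / (ta - la) * measure M (L \<inter> EA A)"
      unfolding Bv_def L_def using su[OF _ EA hf_range] cucj EAp by blast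
  qed
  also have "\<dots> = (\<integral>\<omega>. (\<Sum>A\<in>Pow I. hf j A / (ta - la) * indicator (L \<inter> EA A) \<omega>) \<partial>M)"
    using L EA by (subst Bochner_Integration.integral_sum) (auto simp: Int_absorb2 intro!: int_ind integrable_mult_right)
  also have "\<dots> = (\<integral>\<omega>. alph (\<lambda>i. Pv i \<omega>) j * (if la < Pv j \<omega> \<and> Pv j \<omega> \<le> ta then 1 else 0) / (ta - la) \<partial>M)"
    by (rule Bochner_Integration.integral_cong[OF refl]) (use p2 in auto)
  finally show ?thesis .
qed

end


context adM begin

lemma fact:
  fixes X Y :: "'a \<Rightarrow> real"
  assumes ind: "indep_set (sigma_sets (space M) G1) (sigma_sets (space M) G2)"
    and G: "G1 \<subseteq> Pow (space M)" "G2 \<subseteq> Pow (space M)"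
    and X: "X \<in> measurable (sigma (space M) G1) borel" "X \<in> borel_measurable M" "\<And>\<omega>. \<omega> \<in> space M \<Longrightarrow> \<bar>X \<omega>\<bar> \<le> B1"
    and Y: "Y \<in> measurable (sigma (space M) G2) borel" "Y \<in> borel_measurable M" "\<And>\<omega>. \<omega> \<in> space M \<Longrightarrow> \<bar>Y \<omega>\<bar> \<le> B2"
  shows "(\<integral>\<omega>. X \<omega> * Y \<omega> \<partial>M) = (\<integral>\<omega>. X \<omega> \<partial>M) * (\<integral>\<omega>. Y \<omega> \<partial>M)"
proof (rule indep_var_lebesgue_integral)
  have s1: "sigma_sets (space M) {X -` A \<inter> space M | A. A \<in> sets borel} \<subseteq> sigma_sets (space M) G1"
  proof (rule sigma_sets_mono, safe)
    fix A :: "real set" assume "A \<in> sets borel"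
    from this have "X -` A \<inter> space (sigma (space M) G1) \<in> sets (sigma (space M) G1)" by (rule measurable_sets[OF X(1)])
    then show "X -` A \<inter> space M \<in> sigma_sets (space M) G1" using G by (simp add: sets_measure_of space_measure_of_conv)
  qed
  have s2: "sigma_sets (space M) {Y -` A \<inter> space M | A. A \<in> sets borel} \<subseteq> sigma_sets (space M) G2"
  proof (rule sigma_sets_mono, safe)
    fix A :: "real set" assume "A \<in> sets borel"
    then have "Y -` A \<inter> space (sigma (space M) G2) \<in> sets (sigma (space M) G2)" by (rule measurable_sets[OF Y(1)])
    then show "Y -` A \<inter> space M \<in> sigma_sets (space M) G2" using G by (simp add: sets_measure_of space_measure_of_conv)
  qed
  have "indep_set (sigma_sets (space M) {X -` A \<inter> space M | A. A \<in> sets borel}) (sigma_sets (space M) {Y -` A \<inter> space M | A. A \<in> sets borel})"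
    using ind unfolding indep_set_def by (rule indep_sets_mono_sets) (use s1 s2 in \<open>auto split: bool.split\<close>)
  then show "indep_var borel X borel Y" using X Y by (simp add: indep_var_eq)
  show "integrable M X" using X by (intro int_bounded) auto
  show "integrable M Y" using Y by (intro int_bounded) auto
qed

lemma meas_sigma_gen:
  assumes "{f -` B \<inter> space M | B. B \<in> sets borel} \<subseteq> G" "G \<subseteq> Pow (space M)" "f \<in> space M \<rightarrow> UNIV"
  shows "f \<in> measurable (sigma (space M) G) (borel :: real measure)"
proof (rule measurableI)
  fix x show "f x \<in> space borel" by simp
next
  fix B :: "real set" assume "B \<in> sets borel"
  then have "f -` B \<inter> space M \<in> G" using assms by blast
  then show "f -` B \<inter> space (sigma (space M) G) \<in> sets (sigma (space M) G)"
    using assms by (simp add: sets_measure_of space_measure_of_conv)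
qed

end


context adM begin

definition DD :: "nat \<Rightarrow> (nat \<Rightarrow> real) \<Rightarrow> real" where
  "DD T P = real (max (card (Rset P T)) 1)"

lemma DD_ge1: "1 \<le> DD T P" unfolding DD_def by simp

lemma finite_Rset: "finite (Rset P T)" unfolding addis_Rset_def by (rule finite_subset[of _ "{1..T}"]) auto

lemma bnd:
  fixes x i D :: real
  assumes "0 \<le> x" "x \<le> la" "0 \<le> i" "i \<le> 1" "1 \<le> D"
  shows "\<bar>x * i / ((ta - la) * D)\<bar> \<le> la / (ta - la)"
proof -
  have p: "0 < ta - la" using la_ta by simp
  have "x * i / ((ta - la) * D) \<le> x / (ta - la)"
  proof -
    have "x * i \<le> x * D" using assms by (intro mult_left_mono) auto
    then have "x * i / ((ta - la) * D) \<le> x * D / ((ta - la) * D)" using p assms by (intro divide_right_mono) auto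
    also have "\<dots> = x / (ta - la)" using assms by simp
    finally show ?thesis .
  qed
  also have "\<dots> \<le> la / (ta - la)" using assms p by (intro divide_right_mono) auto
  finally show ?thesis using assms p by (simp add: abs_of_nonneg)
qed

lemma fdr_j:
  assumes j: "1 \<le> j" and cuc0: "cuc (space M) j"
    and ind: "indep_set (sigma_sets (space M) G1) (sigma_sets (space M) G2)"
    and G1_def: "G1 = {Pv j -` B \<inter> space M | B. B \<in> sets borel}"
    and G2_def: "G2 = (\<Union>i\<in>{i. 1 \<le> i \<and> i \<noteq> j}. {Pv i -` B \<inter> space M | B. B \<in> sets borel})"
  shows "(\<integral>\<omega>. (if rej (\<lambda>i. Pv i \<omega>) j then 1 else 0) / DD T (\<lambda>i. Pv i \<omega>) \<partial>M)
    \<le> (\<integral>\<omega>. alph (\<lambda>i. Pv i \<omega>) j * (if la < Pv j \<omega> \<and> Pv j \<omega> \<le> ta then 1 else 0) / ((ta - la) * DD T (\<lambda>i. Pv i \<omega>)) \<partial>M)"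
proof -
  define Q0 where "Q0 i \<omega> = (if i = j \<or> i = 0 then 0 else Pv i \<omega>)" for i \<omega>
  define Q1 where "Q1 i \<omega> = (if i = j then ta else if i = 0 then 0 else Pv i \<omega>)" for i \<omega>
  define I where "I = II j"
  define N1 where "N1 = sigma (space M) G1"
  define N2 where "N2 = sigma (space M) G2"
  define \<alpha>0 where "\<alpha>0 \<omega> = alph (\<lambda>i. Q0 i \<omega>) j" for \<omega>
  define D0 where "D0 \<omega> = DD T (\<lambda>i. Q0 i \<omega>)" for \<omega>
  define D1 where "D1 \<omega> = DD T (\<lambda>i. Q1 i \<omega>)" for \<omega>
  define Av where "Av \<omega> = {x\<in>I. bvec (\<lambda>i. Q0 i \<omega>) x}" for \<omega>
  define Y where "Y A \<omega> = (if Av \<omega> = A then 1 else 0) / D0 \<omega>" for A \<omega>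
  define X where "X v \<omega> = (indicator {..v} (Pv j \<omega>) :: real)" for v \<omega>
  define K where "K \<omega> = (indicator {la<..ta} (Pv j \<omega>) :: real)" for \<omega>
  have finI: "finite I" unfolding I_def by (rule finite_II)
  have G1: "G1 \<subseteq> Pow (space M)" unfolding G1_def by auto
  have G2: "G2 \<subseteq> Pow (space M)" unfolding G2_def by auto
  have Q0M: "Q0 i \<in> borel_measurable M" for i unfolding Q0_def[abs_def] using Pv_meas by simp
  have Q1M: "Q1 i \<in> borel_measurable M" for i unfolding Q1_def[abs_def] using Pv_meas by simp
  have Q0N: "Q0 i \<in> borel_measurable N2" for i
  proof (cases "i = j \<or> i = 0")
    case True then show ?thesis unfolding Q0_def[abs_def] by simp
  next
    case False
    then have "Q0 i = Pv i" unfolding Q0_def[abs_def] by auto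
    moreover have "Pv i \<in> borel_measurable N2"
    proof -
      have i1: "i \<in> {i. 1 \<le> i \<and> i \<noteq> j}" using False by auto
      have "{Pv i -` B \<inter> space M | B. B \<in> sets borel} \<subseteq> G2" unfolding G2_def using i1 by blast
      then show ?thesis unfolding N2_def using G2 by (intro meas_sigma_gen) auto
    qed
    ultimately show ?thesis by simp
  qed
  have PvN1: "Pv j \<in> borel_measurable N1" unfolding N1_def using G1 by (intro meas_sigma_gen) (auto simp: G1_def)
  have XN: "X v \<in> borel_measurable N1" for v
    unfolding X_def[abs_def] by (rule measurable_compose[OF PvN1]) simp
  have XM: "X v \<in> borel_measurable M" for v
    unfolding X_def[abs_def] by (rule measurable_compose[OF Pv_meas]) simp
  have KN: "K \<in> borel_measurable N1"
    unfolding K_def[abs_def] by (rule measurable_compose[OF PvN1]) simp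
  have KM: "K \<in> borel_measurable M"
    unfolding K_def[abs_def] by (rule measurable_compose[OF Pv_meas]) simp
  have Xb: "\<bar>X v \<omega>\<bar> \<le> 1" for v \<omega> unfolding X_def by (simp add: indicator_def)
  have Kb: "\<bar>K \<omega>\<bar> \<le> 1" for \<omega> unfolding K_def by (simp add: indicator_def)
  have K01: "0 \<le> K \<omega>" "K \<omega> \<le> 1" for \<omega> unfolding K_def by (auto simp: indicator_def)
  have Ycode: "Y A \<omega> = (\<lambda>B. (if B \<inter> I = A then 1 else 0) / real (max (card (snd ` (B \<inter> RI T))) 1))
      {x \<in> I \<union> RI T. bvec (\<lambda>i. Q0 i \<omega>) x}" for A \<omega>
  proof -
    have 1: "{x \<in> I \<union> RI T. bvec (\<lambda>i. Q0 i \<omega>) x} \<inter> I = Av \<omega>" unfolding Av_def by auto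
    have 2: "{x \<in> I \<union> RI T. bvec (\<lambda>i. Q0 i \<omega>) x} \<inter> RI T = {x\<in>RI T. bvec (\<lambda>i. Q0 i \<omega>) x}" by auto
    show ?thesis unfolding Y_def D0_def DD_def Rset_code 1 2 by simp
  qed
  have YN: "Y A \<in> borel_measurable N2" for A
    unfolding Ycode[abs_def] using finI finite_RI by (intro vec_meas[OF Q0N]) auto
  have YM: "Y A \<in> borel_measurable M" for A
    unfolding Ycode[abs_def] using finI finite_RI by (intro vec_meas[OF Q0M]) auto
  have D0ge: "1 \<le> D0 \<omega>" for \<omega> unfolding D0_def by (rule DD_ge1)
  have D1ge: "1 \<le> D1 \<omega>" for \<omega> unfolding D1_def by (rule DD_ge1)
  have Yb: "\<bar>Y A \<omega>\<bar> \<le> 1" for A \<omega> unfolding Y_def using D0ge[of \<omega>] by auto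
  have Y0: "0 \<le> Y A \<omega>" for A \<omega> unfolding Y_def using D0ge[of \<omega>] by auto
  have \<alpha>0M: "\<alpha>0 \<in> borel_measurable M" unfolding \<alpha>0_def[abs_def] by (rule alph_meas[OF Q0M])
  have D0M: "D0 \<in> borel_measurable M" unfolding D0_def[abs_def] DD_def by (rule Rset_meas[OF Q0M])
  have D1M: "D1 \<in> borel_measurable M" unfolding D1_def[abs_def] DD_def by (rule Rset_meas[OF Q1M])
  have \<alpha>0r: "0 \<le> \<alpha>0 \<omega>" "\<alpha>0 \<omega> \<le> la" for \<omega> unfolding \<alpha>0_def using alph_nn[OF j] alph_le_la by auto
  have Av_I: "Av \<omega> \<in> Pow I" for \<omega> unfolding Av_def by auto
  have \<alpha>0code: "\<alpha>0 \<omega> = hf j (Av \<omega>)" for \<omega> unfolding \<alpha>0_def Av_def I_def by (rule alph_code[OF j])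
  have agree: "\<forall>k\<in>{1..<j}. Pv k \<omega> = Q0 k \<omega>" for \<omega> unfolding Q0_def by auto
  have fal: "alph (\<lambda>i. Pv i \<omega>) j = \<alpha>0 \<omega>" for \<omega> unfolding \<alpha>0_def by (rule alph_agree_prefix) (simp add: Q0_def)
  have fa: "DD T (\<lambda>i. Pv i \<omega>) = D0 \<omega>" if r: "rej (\<lambda>i. Pv i \<omega>) j" for \<omega>
  proof -
    have le: "Pv j \<omega> \<le> la" using r alph_le_la[of "\<lambda>i. Pv i \<omega>" j] by (simp add: addis_rej_def)
    have r0: "rej (\<lambda>i. Q0 i \<omega>) j"
    proof -
      have a0: "0 \<le> alph (\<lambda>i. Q0 i \<omega>) j" by (rule alph_nn[OF j])
      have q: "Q0 j \<omega> = 0" unfolding Q0_def by simp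
      have "Q0 j \<omega> \<le> alph (\<lambda>i. Q0 i \<omega>) j" using a0 q by linarith
      then show ?thesis unfolding addis_rej_def .
    qed
    have "rej (\<lambda>i. Pv i \<omega>) n = rej (\<lambda>i. Q0 i \<omega>) n" if "1 \<le> n" for n
    proof (rule rej_agree_except[where j=j])
      show "\<And>i. 1 \<le> i \<Longrightarrow> i \<noteq> j \<Longrightarrow> Pv i \<omega> = Q0 i \<omega>" unfolding Q0_def by simp
      have q: "Q0 j \<omega> = 0" unfolding Q0_def by simp
      show "(Pv j \<omega> \<le> la) = (Q0 j \<omega> \<le> la)" using le la_nn q by simp
      show "(Pv j \<omega> \<le> ta) = (Q0 j \<omega> \<le> ta)" using le la_ta la_nn q by simp
      show "1 \<le> j \<Longrightarrow> rej (\<lambda>i. Pv i \<omega>) j = rej (\<lambda>i. Q0 i \<omega>) j" using r r0 by blast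
      show "1 \<le> n" by (rule that)
    qed
    then have "Rset (\<lambda>i. Pv i \<omega>) T = Rset (\<lambda>i. Q0 i \<omega>) T" unfolding addis_Rset_def by auto
    then show ?thesis unfolding D0_def DD_def by simp
  qed
  have fb: "DD T (\<lambda>i. Pv i \<omega>) = D1 \<omega>" if k: "la < Pv j \<omega> \<and> Pv j \<omega> \<le> ta" for \<omega>
  proof -
    have r: "\<not> rej (\<lambda>i. Pv i \<omega>) j" using k alph_le_la[of "\<lambda>i. Pv i \<omega>" j] by (simp add: addis_rej_def)
    have r1: "\<not> rej (\<lambda>i. Q1 i \<omega>) j"
    proof -
      have a1: "alph (\<lambda>i. Q1 i \<omega>) j \<le> la" by (rule alph_le_la)
      have q: "Q1 j \<omega> = ta" unfolding Q1_def by simp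
      have "\<not> Q1 j \<omega> \<le> alph (\<lambda>i. Q1 i \<omega>) j" using a1 q la_ta by linarith
      then show ?thesis unfolding addis_rej_def .
    qed
    have "rej (\<lambda>i. Pv i \<omega>) n = rej (\<lambda>i. Q1 i \<omega>) n" if "1 \<le> n" for n
    proof (rule rej_agree_except[where j=j])
      show "\<And>i. 1 \<le> i \<Longrightarrow> i \<noteq> j \<Longrightarrow> Pv i \<omega> = Q1 i \<omega>" unfolding Q1_def by simp
      have q: "Q1 j \<omega> = ta" unfolding Q1_def by simp
      show "(Pv j \<omega> \<le> la) = (Q1 j \<omega> \<le> la)" using k la_ta q by simp
      show "(Pv j \<omega> \<le> ta) = (Q1 j \<omega> \<le> ta)" using k q by simp
      show "1 \<le> j \<Longrightarrow> rej (\<lambda>i. Pv i \<omega>) j = rej (\<lambda>i. Q1 i \<omega>) j" using r r1 by blast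
      show "1 \<le> n" by (rule that)
    qed
    then have "Rset (\<lambda>i. Pv i \<omega>) T = Rset (\<lambda>i. Q1 i \<omega>) T" unfolding addis_Rset_def by auto
    then show ?thesis unfolding D1_def DD_def by simp
  qed
  have fc: "D1 \<omega> \<le> D0 \<omega>" for \<omega>
  proof -
    have r0: "rej (\<lambda>i. Q0 i \<omega>) j"
    proof -
      have a0: "0 \<le> alph (\<lambda>i. Q0 i \<omega>) j" by (rule alph_nn[OF j])
      have q: "Q0 j \<omega> = 0" unfolding Q0_def by simp
      have "Q0 j \<omega> \<le> alph (\<lambda>i. Q0 i \<omega>) j" using a0 q by linarith
      then show ?thesis unfolding addis_rej_def .
    qed
    have "rej (\<lambda>i. Q1 i \<omega>) n \<Longrightarrow> rej (\<lambda>i. Q0 i \<omega>) n" if "1 \<le> n" for n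
    proof (rule rej_mono_except[where j=j])
      show "\<And>i. 1 \<le> i \<Longrightarrow> i \<noteq> j \<Longrightarrow> Q1 i \<omega> = Q0 i \<omega>" unfolding Q1_def Q0_def by simp
      have q0: "Q0 j \<omega> = 0" unfolding Q0_def by simp
      have q1: "Q1 j \<omega> = ta" unfolding Q1_def by simp
      show "Q1 j \<omega> \<le> la \<Longrightarrow> Q0 j \<omega> \<le> la" using q1 la_ta by simp
      show "Q0 j \<omega> \<le> ta \<Longrightarrow> Q1 j \<omega> \<le> ta" using q1 by simp
      show "1 \<le> j \<Longrightarrow> rej (\<lambda>i. Q1 i \<omega>) j \<Longrightarrow> rej (\<lambda>i. Q0 i \<omega>) j" using r0 by blast
      show "1 \<le> n" by (rule that)
    qed
    then have "Rset (\<lambda>i. Q1 i \<omega>) T \<subseteq> Rset (\<lambda>i. Q0 i \<omega>) T" unfolding addis_Rset_def by auto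
    then have "card (Rset (\<lambda>i. Q1 i \<omega>) T) \<le> card (Rset (\<lambda>i. Q0 i \<omega>) T)" by (intro card_mono finite_Rset)
    then show ?thesis unfolding D0_def D1_def DD_def by simp
  qed
  have intKY: "integrable M (\<lambda>\<omega>. K \<omega> * Y A \<omega>)" for A
  proof (rule int_bounded[where B=1])
    show "(\<lambda>\<omega>. K \<omega> * Y A \<omega>) \<in> borel_measurable M" using KM YM[of A] by (rule borel_measurable_times)
    fix \<omega> show "\<bar>K \<omega> * Y A \<omega>\<bar> \<le> 1" using Kb[of \<omega>] Yb[of A \<omega>] by (simp add: abs_mult mult_le_one)
  qed
  have intXY: "integrable M (\<lambda>\<omega>. X v \<omega> * Y A \<omega>)" for v A
  proof (rule int_bounded[where B=1])
    show "(\<lambda>\<omega>. X v \<omega> * Y A \<omega>) \<in> borel_measurable M" using XM[of v] YM[of A] by (rule borel_measurable_times)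
    fix \<omega> show "\<bar>X v \<omega> * Y A \<omega>\<bar> \<le> 1" using Xb[of v \<omega>] Yb[of A \<omega>] by (simp add: abs_mult mult_le_one)
  qed
  have "(\<integral>\<omega>. (if rej (\<lambda>i. Pv i \<omega>) j then 1 else 0) / DD T (\<lambda>i. Pv i \<omega>) \<partial>M)
      = (\<integral>\<omega>. (\<Sum>A\<in>Pow I. X (hf j A) \<omega> * Y A \<omega>) \<partial>M)"
  proof (intro Bochner_Integration.integral_cong refl)
    fix \<omega> assume "\<omega> \<in> space M"
    have "(\<Sum>A\<in>Pow I. X (hf j A) \<omega> * Y A \<omega>) = (\<Sum>A\<in>Pow I. if Av \<omega> = A then X (hf j A) \<omega> / D0 \<omega> else 0)"
      unfolding Y_def by (intro sum.cong) auto
    also have "\<dots> = X (\<alpha>0 \<omega>) \<omega> / D0 \<omega>" using Av_I[of \<omega>] finI by (simp add: sum.delta' \<alpha>0code)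
    also have "\<dots> = (if rej (\<lambda>i. Pv i \<omega>) j then 1 else 0) / DD T (\<lambda>i. Pv i \<omega>)"
      using fa[of \<omega>] fal[of \<omega>] by (auto simp: X_def addis_rej_def indicator_def)
    finally show "(if rej (\<lambda>i. Pv i \<omega>) j then 1 else 0) / DD T (\<lambda>i. Pv i \<omega>) = (\<Sum>A\<in>Pow I. X (hf j A) \<omega> * Y A \<omega>)" by simp
  qed
  also have "\<dots> = (\<Sum>A\<in>Pow I. (\<integral>\<omega>. X (hf j A) \<omega> * Y A \<omega> \<partial>M))"
  proof (rule Bochner_Integration.integral_sum)
    fix A show "integrable M (\<lambda>\<omega>. X (hf j A) \<omega> * Y A \<omega>)" by (rule intXY)
  qed
  also have "\<dots> = (\<Sum>A\<in>Pow I. (\<integral>\<omega>. X (hf j A) \<omega> \<partial>M) * (\<integral>\<omega>. Y A \<omega> \<partial>M))"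
    using ind G1 G2 XN XM Xb YN YM Yb unfolding N1_def N2_def by (intro sum.cong refl fact[where ?G1.0=G1 and ?G2.0=G2 and ?B1.0=1 and ?B2.0=1]) auto
  also have "\<dots> \<le> (\<Sum>A\<in>Pow I. (hf j A / (ta - la) * (\<integral>\<omega>. K \<omega> \<partial>M)) * (\<integral>\<omega>. Y A \<omega> \<partial>M))"
  proof (rule sum_mono)
    fix A
    have iX: "(\<integral>\<omega>. X v \<omega> \<partial>M) = measure M ({\<omega>\<in>space M. Pv j \<omega> \<le> v} \<inter> space M)" for v
    proof -
      have "(\<integral>\<omega>. X v \<omega> \<partial>M) = (\<integral>\<omega>. indicator {\<omega>\<in>space M. Pv j \<omega> \<le> v} \<omega> \<partial>M)"
        by (intro Bochner_Integration.integral_cong) (auto simp: X_def indicator_def)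
      then show ?thesis by (simp add: Int_absorb2)
    qed
    have iK: "(\<integral>\<omega>. K \<omega> \<partial>M) = measure M ({\<omega>\<in>space M. la < Pv j \<omega> \<and> Pv j \<omega> \<le> ta} \<inter> space M)"
    proof -
      have "(\<integral>\<omega>. K \<omega> \<partial>M) = (\<integral>\<omega>. indicator {\<omega>\<in>space M. la < Pv j \<omega> \<and> Pv j \<omega> \<le> ta} \<omega> \<partial>M)"
        by (intro Bochner_Integration.integral_cong) (auto simp: K_def indicator_def)
      then show ?thesis by (simp add: Int_absorb2)
    qed
    have "(\<integral>\<omega>. X (hf j A) \<omega> \<partial>M) \<le> hf j A / (ta - la) * (\<integral>\<omega>. K \<omega> \<partial>M)"
      unfolding iX iK by (rule su[OF cuc0 sets.top hf_range])
    moreover have "0 \<le> (\<integral>\<omega>. Y A \<omega> \<partial>M)" using Y0 by (intro Bochner_Integration.integral_nonneg) auto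
    ultimately show "(\<integral>\<omega>. X (hf j A) \<omega> \<partial>M) * (\<integral>\<omega>. Y A \<omega> \<partial>M) \<le> (hf j A / (ta - la) * (\<integral>\<omega>. K \<omega> \<partial>M)) * (\<integral>\<omega>. Y A \<omega> \<partial>M)"
      by (rule mult_right_mono)
  qed
  also have "\<dots> = (\<Sum>A\<in>Pow I. hf j A / (ta - la) * (\<integral>\<omega>. K \<omega> * Y A \<omega> \<partial>M))"
    using ind G1 G2 KN KM Kb YN YM Yb unfolding N1_def N2_def
    by (intro sum.cong refl) (subst fact[where ?G1.0=G1 and ?G2.0=G2 and ?B1.0=1 and ?B2.0=1], auto)
  also have "\<dots> = (\<Sum>A\<in>Pow I. (\<integral>\<omega>. hf j A / (ta - la) * (K \<omega> * Y A \<omega>) \<partial>M))"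
    using intKY by (intro sum.cong refl) simp
  also have "\<dots> = (\<integral>\<omega>. (\<Sum>A\<in>Pow I. hf j A / (ta - la) * (K \<omega> * Y A \<omega>)) \<partial>M)"
  proof (rule Bochner_Integration.integral_sum[symmetric])
    fix A show "integrable M (\<lambda>\<omega>. hf j A / (ta - la) * (K \<omega> * Y A \<omega>))"
      using intKY[of A] by (rule integrable_mult_right)
  qed
  also have "\<dots> = (\<integral>\<omega>. \<alpha>0 \<omega> * K \<omega> / ((ta - la) * D0 \<omega>) \<partial>M)"
  proof (intro Bochner_Integration.integral_cong refl)
    fix \<omega> assume "\<omega> \<in> space M"
    have "(\<Sum>A\<in>Pow I. hf j A / (ta - la) * (K \<omega> * Y A \<omega>)) = (\<Sum>A\<in>Pow I. if Av \<omega> = A then hf j A / (ta - la) * (K \<omega> / D0 \<omega>) else 0)"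
      unfolding Y_def by (intro sum.cong) auto
    also have "\<dots> = hf j (Av \<omega>) / (ta - la) * (K \<omega> / D0 \<omega>)" using Av_I[of \<omega>] finI by (simp add: sum.delta')
    finally show "(\<Sum>A\<in>Pow I. hf j A / (ta - la) * (K \<omega> * Y A \<omega>)) = \<alpha>0 \<omega> * K \<omega> / ((ta - la) * D0 \<omega>)"
      by (simp add: \<alpha>0code)
  qed
  also have "\<dots> \<le> (\<integral>\<omega>. \<alpha>0 \<omega> * K \<omega> / ((ta - la) * D1 \<omega>) \<partial>M)"
  proof (rule integral_mono)
    show "integrable M (\<lambda>\<omega>. \<alpha>0 \<omega> * K \<omega> / ((ta - la) * D0 \<omega>))"
      using \<alpha>0M KM D0M \<alpha>0r K01 D0ge by (intro int_bounded[where B="la / (ta - la)"] bnd) auto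
    show "integrable M (\<lambda>\<omega>. \<alpha>0 \<omega> * K \<omega> / ((ta - la) * D1 \<omega>))"
      using \<alpha>0M KM D1M \<alpha>0r K01 D1ge by (intro int_bounded[where B="la / (ta - la)"] bnd) auto
    fix \<omega>
    have nn: "0 \<le> \<alpha>0 \<omega> * K \<omega>" using \<alpha>0r K01 by simp
    have p1: "0 < (ta - la) * D1 \<omega>" using la_ta D1ge[of \<omega>] by simp
    have p0: "0 < (ta - la) * D0 \<omega>" using la_ta D0ge[of \<omega>] by simp
    have le: "(ta - la) * D1 \<omega> \<le> (ta - la) * D0 \<omega>" using la_ta fc[of \<omega>] by simp
    show "\<alpha>0 \<omega> * K \<omega> / ((ta - la) * D0 \<omega>) \<le> \<alpha>0 \<omega> * K \<omega> / ((ta - la) * D1 \<omega>)"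
      by (rule divide_left_mono[OF le nn mult_pos_pos[OF p0 p1]])
  qed
  also have "\<dots> = (\<integral>\<omega>. alph (\<lambda>i. Pv i \<omega>) j * (if la < Pv j \<omega> \<and> Pv j \<omega> \<le> ta then 1 else 0) / ((ta - la) * DD T (\<lambda>i. Pv i \<omega>)) \<partial>M)"
  proof (intro Bochner_Integration.integral_cong refl)
    fix \<omega> assume "\<omega> \<in> space M"
    show "\<alpha>0 \<omega> * K \<omega> / ((ta - la) * D1 \<omega>) = alph (\<lambda>i. Pv i \<omega>) j * (if la < Pv j \<omega> \<and> Pv j \<omega> \<le> ta then 1 else 0) / ((ta - la) * DD T (\<lambda>i. Pv i \<omega>))"
      using fb[of \<omega>] fal[of \<omega>] by (auto simp: K_def indicator_def)
  qed
  finally show ?thesis .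
qed

end


context adM begin

lemma indep_from_nulls:
  assumes ni: "nulls_independent M Pv H0" and j: "j \<in> H0"
  shows "indep_set (sigma_sets (space M) {Pv j -` B \<inter> space M | B. B \<in> sets borel})
     (sigma_sets (space M) (\<Union>i\<in>{i. 1 \<le> i \<and> i \<noteq> j}. {Pv i -` B \<inter> space M | B. B \<in> sets borel}))"
proof -
  define F where "F = (\<lambda>k. case k of
              Some t \<Rightarrow> sets (vimage_algebra (space M) (Pv t) borel)
            | None \<Rightarrow> sigma_sets (space M)
                 (\<Union>j\<in>{j. 1 \<le> j \<and> j \<notin> H0}. sets (vimage_algebra (space M) (Pv j) borel)))"
  define K where "K b = (if b then {Some j} else insert None (Some ` (H0 - {j})))" for b
  have vs: "sets (vimage_algebra (space M) (Pv t) borel) = {Pv t -` B \<inter> space M | B. B \<in> sets borel}" for t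
    by (rule sets_vimage_algebra2) simp
  have ind0: "indep_sets F (insert None (Some ` H0))" using ni unfolding nulls_independent_def F_def .
  have U: "(\<Union>b\<in>UNIV. K b) = insert None (Some ` H0)" using j unfolding K_def by (auto simp: UNIV_bool)
  have "indep_sets (\<lambda>b. sigma_sets (space M) (\<Union>i\<in>K b. F i)) UNIV"
  proof (rule indep_sets_collect_sigma)
    show "indep_sets F (\<Union>b\<in>UNIV. K b)" using ind0 U by simp
    fix i b assume "b \<in> (UNIV::bool set)" "i \<in> K b"
    show "Int_stable (F i)"
    proof (cases i)
      case None
      have "sigma_algebra (space M) (F i)" unfolding None F_def option.case
        by (rule sigma_algebra_sigma_sets) (auto simp: vs)
      then interpret S: sigma_algebra "space M" "F i" .
      show ?thesis by (rule S.Int_stable)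
    next
      case (Some t)
      show ?thesis unfolding Some F_def by (simp add: sets.Int_stable)
    qed
  next
    show "disjoint_family_on K UNIV" unfolding disjoint_family_on_def K_def by auto
  qed
  then have ind1: "indep_set (sigma_sets (space M) (\<Union>i\<in>K True. F i)) (sigma_sets (space M) (\<Union>i\<in>K False. F i))"
    unfolding indep_set_def by (rule indep_sets_mono_sets) (auto split: bool.split)
  have s1: "sigma_sets (space M) {Pv j -` B \<inter> space M | B. B \<in> sets borel} \<subseteq> sigma_sets (space M) (\<Union>i\<in>K True. F i)"
    by (rule sigma_sets_subseteq) (simp add: K_def F_def vs)
  have s2: "sigma_sets (space M) (\<Union>i\<in>{i. 1 \<le> i \<and> i \<noteq> j}. {Pv i -` B \<inter> space M | B. B \<in> sets borel})
      \<subseteq> sigma_sets (space M) (\<Union>i\<in>K False. F i)"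
  proof (rule sigma_sets_mono, safe)
    fix i B assume i: "1 \<le> i" "i \<noteq> j" and B: "B \<in> sets (borel :: real measure)"
    show "Pv i -` B \<inter> space M \<in> sigma_sets (space M) (\<Union>i\<in>K False. F i)"
    proof (cases "i \<in> H0")
      case True
      then have "Pv i -` B \<inter> space M \<in> F (Some i)" unfolding F_def vs using B by auto
      moreover have "Some i \<in> K False" using True i unfolding K_def by auto
      ultimately show ?thesis by blast
    next
      case False
      then have "Pv i -` B \<inter> space M \<in> F None" unfolding F_def vs using B i by auto
      moreover have "None \<in> K False" unfolding K_def by auto
      ultimately show ?thesis by blast
    qed
  qed
  show ?thesis using ind1 unfolding indep_set_def by (rule indep_sets_mono_sets) (use s1 s2 in \<open>auto split: bool.split\<close>)
qed

lemma card_H0_R: "real (card (H0 \<inter> Rset P t)) = (\<Sum>j\<in>H0 \<inter> {1..t}. if rej P j then 1 else 0)"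
proof -
  have "H0 \<inter> Rset P t = {j \<in> H0 \<inter> {1..t}. rej P j}" unfolding addis_Rset_def by auto
  then have "real (card (H0 \<inter> Rset P t)) = (\<Sum>j\<in>{j \<in> H0 \<inter> {1..t}. rej P j}. 1)" by simp
  also have "\<dots> = (\<Sum>j\<in>H0 \<inter> {1..t}. if rej P j then 1 else 0)" by (rule sum.inter_filter) simp
  finally show ?thesis .
qed

lemma term_int:
  assumes j: "1 \<le> j"
  shows "integrable M (\<lambda>\<omega>. alph (\<lambda>i. Pv i \<omega>) j * (if la < Pv j \<omega> \<and> Pv j \<omega> \<le> ta then 1 else 0) / ((ta - la) * DD t (\<lambda>i. Pv i \<omega>)))"
proof (rule int_bounded[where B = "la / (ta - la)"])
  have m1: "(\<lambda>\<omega>. alph (\<lambda>i. Pv i \<omega>) j) \<in> borel_measurable M" by (rule alph_meas[OF Pv_meas])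
  have m2: "(\<lambda>\<omega>. (if la < Pv j \<omega> \<and> Pv j \<omega> \<le> ta then 1 else 0) :: real) \<in> borel_measurable M"
    using Pv_meas[of j] by measurable
  have m3: "(\<lambda>\<omega>. DD t (\<lambda>i. Pv i \<omega>)) \<in> borel_measurable M" unfolding DD_def by (rule Rset_meas[OF Pv_meas])
  show "(\<lambda>\<omega>. alph (\<lambda>i. Pv i \<omega>) j * (if la < Pv j \<omega> \<and> Pv j \<omega> \<le> ta then 1 else 0) / ((ta - la) * DD t (\<lambda>i. Pv i \<omega>))) \<in> borel_measurable M"
    by (rule borel_measurable_divide[OF borel_measurable_times[OF m1 m2] borel_measurable_times[OF borel_measurable_const m3]])
  fix \<omega>
  show "\<bar>alph (\<lambda>i. Pv i \<omega>) j * (if la < Pv j \<omega> \<and> Pv j \<omega> \<le> ta then 1 else 0) / ((ta - la) * DD t (\<lambda>i. Pv i \<omega>))\<bar> \<le> la / (ta - la)"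
  proof (rule bnd)
    show "0 \<le> alph (\<lambda>i. Pv i \<omega>) j" by (rule alph_nn[OF j])
    show "alph (\<lambda>i. Pv i \<omega>) j \<le> la" by (rule alph_le_la)
    show "1 \<le> DD t (\<lambda>i. Pv i \<omega>)" by (rule DD_ge1)
  qed auto
qed

end



theorem mainTheorem3:
  fixes a ta la W0 :: real and g :: "nat \<Rightarrow> real"
    and M :: "'w measure" and Pv :: "nat \<Rightarrow> 'w \<Rightarrow> real" and H0 :: "nat set"
  assumes a: "0 < a" "a < 1"
    and ta: "0 < ta" "ta \<le> 1"
    and la: "0 \<le> la" "la < ta"
    and W0: "0 \<le> W0" "W0 \<le> a"
    and g_nonneg: "\<And>j. 0 \<le> g j"
    and g_noninc: "\<And>j. g (Suc j) \<le> g j"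
    and g_sum: "g sums 1"
    and M: "prob_space M"
    and Pv_meas: "\<And>j. Pv j \<in> borel_measurable M"
    and Pv_range: "\<And>j \<omega>. \<omega> \<in> space M \<Longrightarrow> 0 \<le> Pv j \<omega> \<and> Pv j \<omega> \<le> 1"
    and H0: "0 \<notin> H0"
  shows
    "(\<forall>t\<ge>1. \<exists>f. monotone_past t f \<and>
        (\<forall>P. addis_alpha a ta la W0 g P t =
               f (addis_rej a ta la W0 g P) (\<lambda>i. P i \<le> la) (\<lambda>i. P i \<le> ta)))
     \<and> (\<forall>P t. t \<ge> 1 \<longrightarrow> la < ta \<and> addis_alpha a ta la W0 g P t \<le> la)
     \<and> (\<forall>P t. t \<ge> 1 \<longrightarrow> addis_FDP_hat a ta la W0 g P t \<le> a)
     \<and> (cond_unif_conservative M a ta la W0 g Pv H0 \<longrightarrow>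
          (\<forall>t\<ge>1.
             (\<integral>\<omega>. real (card (H0 \<inter> addis_Rset a ta la W0 g (\<lambda>j. Pv j \<omega>) t)) \<partial>M)
             / (\<integral>\<omega>. real (max (card (addis_Rset a ta la W0 g (\<lambda>j. Pv j \<omega>) t)) 1) \<partial>M)
             \<le> a))
     \<and> (cond_unif_conservative M a ta la W0 g Pv H0 \<and> nulls_independent M Pv H0 \<longrightarrow>
          (\<forall>t\<ge>1.
             (\<integral>\<omega>. real (card (H0 \<inter> addis_Rset a ta la W0 g (\<lambda>j. Pv j \<omega>) t))
                   / real (max (card (addis_Rset a ta la W0 g (\<lambda>j. Pv j \<omega>) t)) 1) \<partial>M)
             \<le> a))"
proof -
  have adM: "adM a ta la W0 g M Pv"
    unfolding adM_def adM_axioms_def ad_def using assms by auto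
  interpret adM a ta la W0 g M Pv by (rule adM)
  have p1: "\<forall>t\<ge>1. \<exists>f. monotone_past t f \<and>
        (\<forall>P. addis_alpha a ta la W0 g P t = f (addis_rej a ta la W0 g P) (\<lambda>i. P i \<le> la) (\<lambda>i. P i \<le> ta))"
    using part1 by auto
  have p2: "\<forall>P t. t \<ge> 1 \<longrightarrow> la < ta \<and> addis_alpha a ta la W0 g P t \<le> la"
    using la alph_le_la by auto
  have p3: "\<forall>P t. t \<ge> 1 \<longrightarrow> addis_FDP_hat a ta la W0 g P t \<le> a" using part3 by auto
  define ind where "ind j \<omega> = (if la < Pv j \<omega> \<and> Pv j \<omega> \<le> ta then 1 else (0::real))" for j \<omega>
  have cucj: "cond_unif_conservative M a ta la W0 g Pv H0 \<Longrightarrow> j \<in> H0 \<Longrightarrow>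
      \<forall>E\<in>addis_past_sets M a ta la W0 g Pv j. cuc E j" for j
    unfolding cond_unif_conservative_def by blast
  have term0: "integrable M (\<lambda>\<omega>. alph (\<lambda>i. Pv i \<omega>) j * ind j \<omega> / (ta - la))" if j1: "1 \<le> j" for j
  proof -
    have "integrable M (\<lambda>\<omega>. alph (\<lambda>i. Pv i \<omega>) j * ind j \<omega> / ((ta - la) * DD 0 (\<lambda>i. Pv i \<omega>)))"
      using term_int[OF j1, of 0] unfolding ind_def .
    moreover have "DD 0 P = 1" for P :: "nat \<Rightarrow> real"
      unfolding DD_def addis_Rset_def by simp
    ultimately show ?thesis by simp
  qed
  have term1: "integrable M (\<lambda>\<omega>. alph (\<lambda>i. Pv i \<omega>) j * ind j \<omega> / ((ta - la) * DD t (\<lambda>i. Pv i \<omega>)))" if j1: "1 \<le> j" for j t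
    using term_int[OF j1, of t] unfolding ind_def .
  have termnn: "0 \<le> alph (\<lambda>i. Pv i \<omega>) j * ind j \<omega> / ((ta - la) * D)" if "1 \<le> j" "0 \<le> D" for j \<omega> D
    using alph_nn[OF that(1)] la_ta that by (auto simp: ind_def)
  have DDM: "(\<lambda>\<omega>. DD t (\<lambda>i. Pv i \<omega>)) \<in> borel_measurable M" for t
    unfolding DD_def by (rule Rset_meas[of Pv M, OF Pv_meas])
  have cardM: "(\<lambda>\<omega>. real (card (H0 \<inter> Rset (\<lambda>i. Pv i \<omega>) t))) \<in> borel_measurable M" for t
    by (rule Rset_meas[of Pv M, OF Pv_meas])
  have Rle: "card (Rset P t) \<le> t" for P t
  proof -
    have "card (Rset P t) \<le> card {1..t}" unfolding addis_Rset_def by (intro card_mono) auto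
    then show ?thesis by simp
  qed
  have p4: "cond_unif_conservative M a ta la W0 g Pv H0 \<longrightarrow>
          (\<forall>t\<ge>1.
             (\<integral>\<omega>. real (card (H0 \<inter> addis_Rset a ta la W0 g (\<lambda>j. Pv j \<omega>) t)) \<partial>M)
             / (\<integral>\<omega>. real (max (card (addis_Rset a ta la W0 g (\<lambda>j. Pv j \<omega>) t)) 1) \<partial>M)
             \<le> a)"
  proof (intro impI allI)
    fix t :: nat assume cu: "cond_unif_conservative M a ta la W0 g Pv H0" and t: "1 \<le> t"
    define J where "J = H0 \<inter> {1..t}"
    have finJ: "finite J" unfolding J_def by simp
    have J: "j \<in> J \<Longrightarrow> j \<in> H0 \<and> 1 \<le> j \<and> j \<le> t" for j unfolding J_def by auto
    have "(\<integral>\<omega>. real (card (H0 \<inter> Rset (\<lambda>j. Pv j \<omega>) t)) \<partial>M)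
        = (\<integral>\<omega>. (\<Sum>j\<in>J. indicator {\<omega>\<in>space M. rej (\<lambda>i. Pv i \<omega>) j} \<omega>) \<partial>M)"
      unfolding card_H0_R J_def[symmetric] by (intro Bochner_Integration.integral_cong refl sum.cong) (auto simp: indicator_def)
    also have "\<dots> = (\<Sum>j\<in>J. measure M {\<omega>\<in>space M. rej (\<lambda>i. Pv i \<omega>) j})"
      using rej_meas[of Pv M, OF Pv_meas] by (subst Bochner_Integration.integral_sum) (auto simp: Int_absorb2 intro!: int_ind)
    also have "\<dots> \<le> (\<Sum>j\<in>J. (\<integral>\<omega>. alph (\<lambda>i. Pv i \<omega>) j * ind j \<omega> / (ta - la) \<partial>M))"
      unfolding ind_def using J cucj[OF cu] by (intro sum_mono mfdr_j) auto
    also have "\<dots> \<le> (\<Sum>j\<in>{1..t}. (\<integral>\<omega>. alph (\<lambda>i. Pv i \<omega>) j * ind j \<omega> / (ta - la) \<partial>M))"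
    proof (rule sum_mono2)
      show "J \<subseteq> {1..t}" unfolding J_def by auto
      fix j assume "j \<in> {1..t} - J"
      then have j1: "1 \<le> j" by auto
      show "0 \<le> (\<integral>\<omega>. alph (\<lambda>i. Pv i \<omega>) j * ind j \<omega> / (ta - la) \<partial>M)"
        using termnn[OF j1, of 1] by (intro Bochner_Integration.integral_nonneg) auto
    qed simp
    also have "\<dots> = (\<integral>\<omega>. (\<Sum>j\<in>{1..t}. alph (\<lambda>i. Pv i \<omega>) j * ind j \<omega> / (ta - la)) \<partial>M)"
      using term0 by (subst Bochner_Integration.integral_sum) auto
    also have "\<dots> \<le> (\<integral>\<omega>. a * real (max (card (Rset (\<lambda>j. Pv j \<omega>) t)) 1) \<partial>M)"
    proof (rule integral_mono)
      show "integrable M (\<lambda>\<omega>. \<Sum>j\<in>{1..t}. alph (\<lambda>i. Pv i \<omega>) j * ind j \<omega> / (ta - la))"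
        using term0 by auto
      have "(\<lambda>\<omega>. real (max (card (Rset (\<lambda>j. Pv j \<omega>) t)) 1)) \<in> borel_measurable M"
        by (rule Rset_meas[of Pv M, OF Pv_meas])
      moreover have "\<bar>real (max (card (Rset (\<lambda>j. Pv j \<omega>) t)) 1)\<bar> \<le> real t + 1" for \<omega>
        using Rle[of "\<lambda>j. Pv j \<omega>" t] by simp
      ultimately show "integrable M (\<lambda>\<omega>. a * real (max (card (Rset (\<lambda>j. Pv j \<omega>) t)) 1))"
        by (intro integrable_mult_right int_bounded[where B="real t + 1"]) auto
      fix \<omega> show "(\<Sum>j\<in>{1..t}. alph (\<lambda>i. Pv i \<omega>) j * ind j \<omega> / (ta - la)) \<le> a * real (max (card (Rset (\<lambda>j. Pv j \<omega>) t)) 1)"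
        using num_le[where P="\<lambda>j. Pv j \<omega>" and T=t] unfolding ind_def .
    qed
    also have "\<dots> = a * (\<integral>\<omega>. real (max (card (Rset (\<lambda>j. Pv j \<omega>) t)) 1) \<partial>M)" by simp
    finally have le: "(\<integral>\<omega>. real (card (H0 \<inter> Rset (\<lambda>j. Pv j \<omega>) t)) \<partial>M)
        \<le> a * (\<integral>\<omega>. real (max (card (Rset (\<lambda>j. Pv j \<omega>) t)) 1) \<partial>M)" .
    have "(\<integral>\<omega>. 1 \<partial>M) \<le> (\<integral>\<omega>. real (max (card (Rset (\<lambda>j. Pv j \<omega>) t)) 1) \<partial>M)"
    proof (rule integral_mono)
      have "(\<lambda>\<omega>. real (max (card (Rset (\<lambda>j. Pv j \<omega>) t)) 1)) \<in> borel_measurable M"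
        by (rule Rset_meas[of Pv M, OF Pv_meas])
      moreover have "\<bar>real (max (card (Rset (\<lambda>j. Pv j \<omega>) t)) 1)\<bar> \<le> real t + 1" for \<omega>
        using Rle[of "\<lambda>j. Pv j \<omega>" t] by simp
      ultimately show "integrable M (\<lambda>\<omega>. real (max (card (Rset (\<lambda>j. Pv j \<omega>) t)) 1))"
        by (intro int_bounded[where B="real t + 1"]) auto
    qed auto
    then have pos: "1 \<le> (\<integral>\<omega>. real (max (card (Rset (\<lambda>j. Pv j \<omega>) t)) 1) \<partial>M)" by (simp add: prob_space)
    show "(\<integral>\<omega>. real (card (H0 \<inter> Rset (\<lambda>j. Pv j \<omega>) t)) \<partial>M)
             / (\<integral>\<omega>. real (max (card (Rset (\<lambda>j. Pv j \<omega>) t)) 1) \<partial>M) \<le> a"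
      using le pos by (simp add: divide_le_eq mult.commute)
  qed
  have p5: "cond_unif_conservative M a ta la W0 g Pv H0 \<and> nulls_independent M Pv H0 \<longrightarrow>
          (\<forall>t\<ge>1.
             (\<integral>\<omega>. real (card (H0 \<inter> addis_Rset a ta la W0 g (\<lambda>j. Pv j \<omega>) t))
                   / real (max (card (addis_Rset a ta la W0 g (\<lambda>j. Pv j \<omega>) t)) 1) \<partial>M)
             \<le> a)"
  proof (intro impI allI)
    fix t :: nat assume cn: "cond_unif_conservative M a ta la W0 g Pv H0 \<and> nulls_independent M Pv H0" and t: "1 \<le> t"
    define J where "J = H0 \<inter> {1..t}"
    have finJ: "finite J" unfolding J_def by simp
    have J: "j \<in> J \<Longrightarrow> j \<in> H0 \<and> 1 \<le> j \<and> j \<le> t" for j unfolding J_def by auto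
    have "(\<integral>\<omega>. real (card (H0 \<inter> Rset (\<lambda>j. Pv j \<omega>) t)) / real (max (card (Rset (\<lambda>j. Pv j \<omega>) t)) 1) \<partial>M)
        = (\<integral>\<omega>. (\<Sum>j\<in>J. (if rej (\<lambda>i. Pv i \<omega>) j then 1 else 0) / DD t (\<lambda>i. Pv i \<omega>)) \<partial>M)"
      unfolding card_H0_R J_def[symmetric] DD_def by (intro Bochner_Integration.integral_cong refl) (simp add: sum_divide_distrib)
    also have "\<dots> = (\<Sum>j\<in>J. (\<integral>\<omega>. (if rej (\<lambda>i. Pv i \<omega>) j then 1 else 0) / DD t (\<lambda>i. Pv i \<omega>) \<partial>M))"
    proof (rule Bochner_Integration.integral_sum)
      fix j
      have "(\<lambda>\<omega>. (if rej (\<lambda>i. Pv i \<omega>) j then 1 else 0) / DD t (\<lambda>i. Pv i \<omega>)) \<in> borel_measurable M"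
      proof -
        have "(\<lambda>\<omega>. (if rej (\<lambda>i. Pv i \<omega>) j then 1 else 0) :: real) \<in> borel_measurable M"
          by (rule measurable_If[OF measurable_const measurable_const rej_meas[of Pv M j, OF Pv_meas]]) auto
        then show ?thesis using DDM[of t] by (intro borel_measurable_divide)
      qed
      moreover have "\<bar>(if rej (\<lambda>i. Pv i \<omega>) j then 1 else 0) / DD t (\<lambda>i. Pv i \<omega>)\<bar> \<le> 1" for \<omega>
        using DD_ge1[of t "\<lambda>i. Pv i \<omega>"] by auto
      ultimately show "integrable M (\<lambda>\<omega>. (if rej (\<lambda>i. Pv i \<omega>) j then 1 else 0) / DD t (\<lambda>i. Pv i \<omega>))"
        by (intro int_bounded[where B=1]) auto
    qed
    also have "\<dots> \<le> (\<Sum>j\<in>J. (\<integral>\<omega>. alph (\<lambda>i. Pv i \<omega>) j * ind j \<omega> / ((ta - la) * DD t (\<lambda>i. Pv i \<omega>)) \<partial>M))"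
    proof (rule sum_mono)
      fix j assume jJ: "j \<in> J"
      have sp: "space M \<in> addis_past_sets M a ta la W0 g Pv j" unfolding addis_past_sets_def by (rule sigma_sets_top)
      have jH: "j \<in> H0" using J[OF jJ] by simp
      have c0: "cuc (space M) j" by (rule bspec[OF cucj[OF conjunct1[OF cn] jH] sp])
      show "(\<integral>\<omega>. (if rej (\<lambda>i. Pv i \<omega>) j then 1 else 0) / DD t (\<lambda>i. Pv i \<omega>) \<partial>M)
          \<le> (\<integral>\<omega>. alph (\<lambda>i. Pv i \<omega>) j * ind j \<omega> / ((ta - la) * DD t (\<lambda>i. Pv i \<omega>)) \<partial>M)"
        unfolding ind_def using J[OF jJ] c0 indep_from_nulls[OF conjunct2[OF cn], of j]
        by (intro fdr_j) auto
    qed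
    also have "\<dots> \<le> (\<Sum>j\<in>{1..t}. (\<integral>\<omega>. alph (\<lambda>i. Pv i \<omega>) j * ind j \<omega> / ((ta - la) * DD t (\<lambda>i. Pv i \<omega>)) \<partial>M))"
    proof (rule sum_mono2)
      show "J \<subseteq> {1..t}" unfolding J_def by auto
      fix j assume "j \<in> {1..t} - J"
      then have j1: "1 \<le> j" by auto
      show "0 \<le> (\<integral>\<omega>. alph (\<lambda>i. Pv i \<omega>) j * ind j \<omega> / ((ta - la) * DD t (\<lambda>i. Pv i \<omega>)) \<partial>M)"
      proof (rule Bochner_Integration.integral_nonneg)
        fix \<omega>
        have "0 \<le> DD t (\<lambda>i. Pv i \<omega>)" using DD_ge1[of t "\<lambda>i. Pv i \<omega>"] by linarith
        then show "0 \<le> alph (\<lambda>i. Pv i \<omega>) j * ind j \<omega> / ((ta - la) * DD t (\<lambda>i. Pv i \<omega>))"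
          by (rule termnn[OF j1])
      qed
    qed simp
    also have "\<dots> = (\<integral>\<omega>. (\<Sum>j\<in>{1..t}. alph (\<lambda>i. Pv i \<omega>) j * ind j \<omega> / ((ta - la) * DD t (\<lambda>i. Pv i \<omega>))) \<partial>M)"
      using term1 by (subst Bochner_Integration.integral_sum) auto
    also have "\<dots> \<le> (\<integral>\<omega>. a \<partial>M)"
    proof (rule integral_mono)
      show "integrable M (\<lambda>\<omega>. \<Sum>j\<in>{1..t}. alph (\<lambda>i. Pv i \<omega>) j * ind j \<omega> / ((ta - la) * DD t (\<lambda>i. Pv i \<omega>)))"
        using term1 by auto
      show "integrable M (\<lambda>\<omega>. a)" by simp
      fix \<omega>
      have D: "1 \<le> DD t (\<lambda>i. Pv i \<omega>)" by (rule DD_ge1)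
      have "(\<Sum>j\<in>{1..t}. alph (\<lambda>i. Pv i \<omega>) j * ind j \<omega> / ((ta - la) * DD t (\<lambda>i. Pv i \<omega>)))
          = (\<Sum>j\<in>{1..t}. alph (\<lambda>i. Pv i \<omega>) j * ind j \<omega> / (ta - la)) / DD t (\<lambda>i. Pv i \<omega>)"
        by (simp add: sum_divide_distrib)
      also have "\<dots> \<le> a * DD t (\<lambda>i. Pv i \<omega>) / DD t (\<lambda>i. Pv i \<omega>)"
        using num_le[where P="\<lambda>j. Pv j \<omega>" and T=t] D unfolding ind_def DD_def
        by (intro divide_right_mono) auto
      also have "\<dots> = a" using D by simp
      finally show "(\<Sum>j\<in>{1..t}. alph (\<lambda>i. Pv i \<omega>) j * ind j \<omega> / ((ta - la) * DD t (\<lambda>i. Pv i \<omega>))) \<le> a" .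
    qed
    also have "\<dots> = a" by (simp add: prob_space)
    finally show "(\<integral>\<omega>. real (card (H0 \<inter> Rset (\<lambda>j. Pv j \<omega>) t)) / real (max (card (Rset (\<lambda>j. Pv j \<omega>) t)) 1) \<partial>M) \<le> a" .
  qed
  show ?thesis using p1 p2 p3 p4 p5 by blast
qed



end
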